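(* Let $F$ be a finite nontrivial group and $S$ a finite symmetric generating set of $\mathbb{Z}\wr F$. Let $\Lambda$ be a uniformly random (i.i.d. uniform) configuration in $F^{\mathbb{Z}}$ and let $\Lambda_n$ be its restriction to $\{1,\dots,n\}$ (a uniform element of $\oplus_{z\in\{1,\dots,n\}}F$). For $x,y\in\mathbb{Z}$ let $\mathrm{TSP}_S(\Lambda_n;x,y)$ be the length of the shortest $S$-path writing $\Lambda_n$ whose projection to $\mathbb{Z}$ starts at $x$ and ends at $y$. Then there are constants $c_1,c_2>0$ such that almost surely \[ \lim_{n\to\infty}\frac1n\mathrm{TSP}_S(\Lambda_n;1,1)=c_1,\qquad \lim_{n\to\infty}\frac1n\mathrm{TSP}_S(\Lambda_n;1,n)=c_2. \]
   Context: Elements of $\mathbb{Z}\wr F$ are pairs $(x,f)$ with $x\in\mathbb{Z}$, $f:\mathbb{Z}\to F$ finitely supported. An $S$-path is a sequence $(x_0,\dots,x_k)$ with $x_{i-1}^{-1}x_i\in S$, of length $k$. An $S$-path writing a configuration $\phi$ with projected start $x$ and end $y$ is one with $x_0=(x,\mathbf{0})$ and $x_k=(y,\phi)$, where $\mathbf 0$ is the trivial configuration. *)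

theory Defs
  imports "HOL-Probability.Probability"
begin

text \<open>The finite group F is a type of class
  group_add (not necessarily commutative); its operation is written additively.\<close>

definition wr_carrier :: "(int \<times> (int \<Rightarrow> 'f::group_add)) set" where
  "wr_carrier = {(x, f). finite {z. f z \<noteq> 0}}"

definition wr_one :: "int \<times> (int \<Rightarrow> 'f::group_add)" where
  "wr_one = (0, \<lambda>_. 0)"

definition wr_mult :: "int \<times> (int \<Rightarrow> 'f::group_add) \<Rightarrow> int \<times> (int \<Rightarrow> 'f) \<Rightarrow> int \<times> (int \<Rightarrow> 'f)" where
  "wr_mult a b = (fst a + fst b, \<lambda>z. snd a z + snd b (z - fst a))"

definition wr_inv :: "int \<times> (int \<Rightarrow> 'f::group_add) \<Rightarrow> int \<times> (int \<Rightarrow> 'f)" where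
  "wr_inv a = (- fst a, \<lambda>z. - snd a (z + fst a))"

inductive_set wr_words :: "(int \<times> (int \<Rightarrow> 'f::group_add)) set \<Rightarrow> (int \<times> (int \<Rightarrow> 'f)) set"
  for S where
  one: "wr_one \<in> wr_words S"
| step: "g \<in> wr_words S \<Longrightarrow> s \<in> S \<Longrightarrow> wr_mult g s \<in> wr_words S"

definition wr_symmetric_generating_set :: "(int \<times> (int \<Rightarrow> 'f::group_add)) set \<Rightarrow> bool" where
  "wr_symmetric_generating_set S \<longleftrightarrow>
     finite S \<and> S \<subseteq> wr_carrier \<and> (\<forall>s\<in>S. wr_inv s \<in> S) \<and> wr_words S = wr_carrier"

definition writing_path ::
  "(int \<times> (int \<Rightarrow> 'f::group_add)) set \<Rightarrow> (int \<Rightarrow> 'f) \<Rightarrow> int \<Rightarrow> int \<Rightarrow> nat \<Rightarrow> (nat \<Rightarrow> int \<times> (int \<Rightarrow> 'f)) \<Rightarrow> bool" where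
  "writing_path S phi x y k p \<longleftrightarrow>
     p 0 = (x, \<lambda>_. 0) \<and> p k = (y, phi) \<and> (\<forall>i<k. wr_mult (wr_inv (p i)) (p (Suc i)) \<in> S)"

definition TSP :: "(int \<times> (int \<Rightarrow> 'f::group_add)) set \<Rightarrow> (int \<Rightarrow> 'f) \<Rightarrow> int \<Rightarrow> int \<Rightarrow> nat" where
  "TSP S phi x y = (LEAST k. \<exists>p. writing_path S phi x y k p)"

definition restr_conf :: "(int \<Rightarrow> 'f::group_add) \<Rightarrow> nat \<Rightarrow> int \<Rightarrow> 'f" where
  "restr_conf \<omega> n = (\<lambda>z. if z \<in> {1..int n} then \<omega> z else 0)"

definition unif_conf_measure :: "(int \<Rightarrow> 'f::{finite,group_add}) measure" where
  "unif_conf_measure = PiM UNIV (\<lambda>_::int. measure_pmf (pmf_of_set (UNIV :: 'f set)))"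

end

theory Submission
  imports Defs "HOL-Library.Discrete_Functions" "HOL-Real_Asymp.Real_Asymp"
begin

lemma wr_mult_simps: "wr_mult (x, f) (y, g) = (x + y, \<lambda>z. f z + g (z - x))"
  by (simp add: wr_mult_def)
lemma wr_inv_simps: "wr_inv (x, f) = (- x, \<lambda>z. - f (z + x))"
  by (simp add: wr_inv_def)

lemma wr_mult_assoc: "wr_mult (wr_mult a b) c = wr_mult a (wr_mult b c)"
  by (cases a; cases b; cases c) (simp add: wr_mult_simps add.assoc algebra_simps)
lemma wr_one_left[simp]: "wr_mult wr_one a = a"
  by (cases a) (simp add: wr_mult_simps wr_one_def)
lemma wr_one_right[simp]: "wr_mult a wr_one = a"
  by (cases a) (simp add: wr_mult_simps wr_one_def)
lemma wr_inv_left[simp]: "wr_mult (wr_inv a) a = wr_one"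
  by (cases a) (simp add: wr_mult_simps wr_inv_simps wr_one_def fun_eq_iff)
lemma wr_inv_right[simp]: "wr_mult a (wr_inv a) = wr_one"
  by (cases a) (simp add: wr_mult_simps wr_inv_simps wr_one_def fun_eq_iff)
lemma wr_inv_cancel[simp]: "wr_mult (wr_inv a) (wr_mult a b) = b"
  by (metis wr_mult_assoc wr_inv_left wr_one_left)
lemma wr_inv_cancel2[simp]: "wr_mult a (wr_mult (wr_inv a) b) = b"
  by (metis wr_mult_assoc wr_inv_right wr_one_left)

definition wprod :: "(int \<times> (int \<Rightarrow> 'f::group_add)) list \<Rightarrow> int \<times> (int \<Rightarrow> 'f)" where
  "wprod ws = foldr wr_mult ws wr_one"

lemma wprod_Nil[simp]: "wprod [] = wr_one" by (simp add: wprod_def)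
lemma wprod_Cons[simp]: "wprod (a # ws) = wr_mult a (wprod ws)" by (simp add: wprod_def)
lemma wprod_append: "wprod (xs @ ys) = wr_mult (wprod xs) (wprod ys)"
  by (induction xs) (simp_all add: wr_mult_assoc)
lemma wprod_snoc: "wprod (xs @ [a]) = wr_mult (wprod xs) a"
  by (simp add: wprod_append)

lemma carrier_mult:
  assumes "a \<in> wr_carrier" "b \<in> wr_carrier" shows "wr_mult a b \<in> wr_carrier"
proof -
  obtain x f y g where ab: "a = (x, f)" "b = (y, g)" by fastforce
  have ff: "finite {z. f z \<noteq> 0}" "finite {z. g z \<noteq> 0}" using assms ab by (auto simp: wr_carrier_def)
  have "{z. f z + g (z - x) \<noteq> 0} \<subseteq> {z. f z \<noteq> 0} \<union> (\<lambda>z. z + x) ` {z. g z \<noteq> 0}"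
    by (auto simp: image_iff) (metis add.commute add.left_neutral diff_add_cancel)
  moreover have "finite ({z. f z \<noteq> 0} \<union> (\<lambda>z. z + x) ` {z. g z \<noteq> 0})" using ff by auto
  ultimately show ?thesis using ab by (auto simp: wr_carrier_def wr_mult_simps intro: finite_subset)
qed

lemma carrier_inv:
  assumes "a \<in> wr_carrier" shows "wr_inv a \<in> wr_carrier"
proof -
  obtain x f where ab: "a = (x, f)" by fastforce
  have ff: "finite {z. f z \<noteq> 0}" using assms ab by (auto simp: wr_carrier_def)
  have "{z. - f (z + x) \<noteq> 0} \<subseteq> (\<lambda>z. z - x) ` {z. f z \<noteq> 0}"
    by (auto simp: image_iff) (metis add_diff_cancel)
  then show ?thesis using ab ff by (auto simp: wr_carrier_def wr_inv_simps intro: finite_subset)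
qed

lemma carrier_one[simp]: "wr_one \<in> wr_carrier" by (simp add: wr_one_def wr_carrier_def)

lemma TSP_eq_aux:
  "(\<exists>p. writing_path S phi x y k p) \<longleftrightarrow>
   (\<exists>ws. set ws \<subseteq> S \<and> length ws = k \<and> wprod ws = (y - x, \<lambda>z. phi (z + x)))"
proof
  assume "\<exists>p. writing_path S phi x y k p"
  then obtain p where p: "writing_path S phi x y k p" by blast
  define f where "f i = wr_mult (wr_inv (p i)) (p (Suc i))" for i
  have *: "j \<le> k \<Longrightarrow> wr_mult (p 0) (wprod (map f [0..<j])) = p j" for j
  proof (induction j)
    case 0 then show ?case by simp
  next
    case (Suc j)
    have "wr_mult (p 0) (wprod (map f [0..<Suc j])) = wr_mult (wr_mult (p 0) (wprod (map f [0..<j]))) (f j)"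
      by (simp add: wprod_snoc wr_mult_assoc)
    also have "\<dots> = wr_mult (p j) (f j)" using Suc by simp
    also have "\<dots> = p (Suc j)" by (simp add: f_def)
    finally show ?case .
  qed
  have "wprod (map f [0..<k]) = wr_mult (wr_inv (p 0)) (p k)"
    using *[of k] wr_inv_cancel[of "p 0" "wprod (map f [0..<k])"] by simp
  also have "\<dots> = (y - x, \<lambda>z. phi (z + x))"
    using p by (simp add: writing_path_def wr_inv_simps wr_mult_simps)
  finally show "\<exists>ws. set ws \<subseteq> S \<and> length ws = k \<and> wprod ws = (y - x, \<lambda>z. phi (z + x))"
    using p by (intro exI[of _ "map f [0..<k]"]) (auto simp: f_def writing_path_def)
next
  assume "\<exists>ws. set ws \<subseteq> S \<and> length ws = k \<and> wprod ws = (y - x, \<lambda>z. phi (z + x))"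
  then obtain ws where ws: "set ws \<subseteq> S" "length ws = k" "wprod ws = (y - x, \<lambda>z. phi (z + x))" by blast
  define p where "p i = wr_mult (x, \<lambda>_. 0) (wprod (take i ws))" for i
  have "p 0 = (x, \<lambda>_. 0)" by (simp add: p_def wr_one_def wr_mult_simps)
  moreover have "p k = (y, phi)" using ws by (simp add: p_def wr_mult_simps)
  moreover have "wr_mult (wr_inv (p i)) (p (Suc i)) \<in> S" if "i < k" for i
  proof -
    have "take (Suc i) ws = take i ws @ [ws ! i]" using that ws by (simp add: take_Suc_conv_app_nth)
    then have "p (Suc i) = wr_mult (p i) (ws ! i)" by (simp add: p_def wprod_snoc wr_mult_assoc)
    then show ?thesis using that ws by (auto simp: nth_mem)
  qed
  ultimately show "\<exists>p. writing_path S phi x y k p" unfolding writing_path_def by blast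
qed


definition SS :: "int \<Rightarrow> 'f::group_add \<Rightarrow> int \<times> (int \<Rightarrow> 'f)" where
  "SS j e = (0, \<lambda>z. if z = j then e else 0)"

lemma SS_carrier[simp]: "SS j e \<in> wr_carrier"
proof -
  have "{z. (if z = j then e else 0) \<noteq> 0} \<subseteq> {j}" by auto
  then show ?thesis by (auto simp: SS_def wr_carrier_def intro: finite_subset)
qed

lemma move_carrier[simp]: "(k, \<lambda>_. 0) \<in> wr_carrier"
  by (simp add: wr_carrier_def)

locale wrS =
  fixes S :: "(int \<times> (int \<Rightarrow> 'f::{finite,group_add})) set"
  assumes gen: "wr_symmetric_generating_set S"
begin

lemma S_fin: "finite S" and S_car: "S \<subseteq> wr_carrier" and S_sym: "s \<in> S \<Longrightarrow> wr_inv s \<in> S"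
  and words: "wr_words S = wr_carrier"
  using gen by (auto simp: wr_symmetric_generating_set_def)

lemma word_exists: assumes "g \<in> wr_carrier" shows "\<exists>ws. set ws \<subseteq> S \<and> wprod ws = g"
proof -
  have "g \<in> wr_words S" using assms words by simp
  then show ?thesis
  proof (induction rule: wr_words.induct)
    case one then show ?case by (intro exI[of _ "[]"]) simp
  next
    case (step g s)
    then obtain ws where "set ws \<subseteq> S" "wprod ws = g" by blast
    then show ?case using step by (intro exI[of _ "ws @ [s]"]) (simp add: wprod_snoc)
  qed
qed

lemma wprod_carrier: "set ws \<subseteq> S \<Longrightarrow> wprod ws \<in> wr_carrier"
proof (induction ws)
  case (Cons a ws) then show ?case using S_car by (auto intro!: carrier_mult)
qed simp

definition wl :: "int \<times> (int \<Rightarrow> 'f) \<Rightarrow> nat" where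
  "wl g = (LEAST k. \<exists>ws. set ws \<subseteq> S \<and> length ws = k \<and> wprod ws = g)"

lemma wl_opt: assumes "g \<in> wr_carrier"
  shows "\<exists>ws. set ws \<subseteq> S \<and> length ws = wl g \<and> wprod ws = g"
proof -
  obtain ws where "set ws \<subseteq> S" "wprod ws = g" using word_exists assms by blast
  then have "\<exists>k ws. set ws \<subseteq> S \<and> length ws = k \<and> wprod ws = g" by blast
  then show ?thesis unfolding wl_def by (rule LeastI_ex)
qed

lemma wl_le: "set ws \<subseteq> S \<Longrightarrow> wl (wprod ws) \<le> length ws"
  unfolding wl_def by (rule Least_le) blast

lemma wl_mult: assumes "a \<in> wr_carrier" "b \<in> wr_carrier"
  shows "wl (wr_mult a b) \<le> wl a + wl b"
proof -
  obtain us where us: "set us \<subseteq> S" "length us = wl a" "wprod us = a" using wl_opt assms by blast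
  obtain vs where vs: "set vs \<subseteq> S" "length vs = wl b" "wprod vs = b" using wl_opt assms by blast
  have "wl (wprod (us @ vs)) \<le> length (us @ vs)" using us vs by (intro wl_le) auto
  then show ?thesis using us vs by (simp add: wprod_append)
qed

lemma TSP_wl: "TSP S phi x y = wl (y - x, \<lambda>z. phi (z + x))"
  unfolding TSP_def wl_def TSP_eq_aux ..

definition R :: int where
  "R = Max (insert 0 (abs ` (\<Union>s\<in>S. insert (fst s) {z. snd s z \<noteq> 0})))"

lemma R_finite: "finite (insert 0 (abs ` (\<Union>s\<in>S. insert (fst s) {z. snd s z \<noteq> 0})))"
proof -
  have "finite {z. snd s z \<noteq> 0}" if "s \<in> S" for s
    using that S_car by (cases s) (auto simp: wr_carrier_def)
  then show ?thesis using S_fin by auto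
qed

lemma R_nonneg: "0 \<le> R"
  unfolding R_def using R_finite by (intro Max_ge) auto
lemma R_fst: "s \<in> S \<Longrightarrow> \<bar>fst s\<bar> \<le> R"
  unfolding R_def using R_finite by (intro Max_ge) auto
lemma R_snd: "s \<in> S \<Longrightarrow> snd s z \<noteq> 0 \<Longrightarrow> \<bar>z\<bar> \<le> R"
  unfolding R_def using R_finite by (intro Max_ge) auto

lemma wprod_snoc_fst: "fst (wprod (xs @ [s])) = fst (wprod xs) + fst s"
  by (simp add: wprod_snoc wr_mult_def)
lemma wprod_snoc_snd: "snd (wprod (xs @ [s])) z = snd (wprod xs) z + snd s (z - fst (wprod xs))"
  by (simp add: wprod_snoc wr_mult_def)
lemma wr_one_fst[simp]: "fst wr_one = 0" and wr_one_snd[simp]: "snd wr_one z = 0"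
  by (simp_all add: wr_one_def)

lemma visit1:
  assumes "set ws \<subseteq> S" "0 \<le> w" "w \<le> fst (wprod ws)"
  shows "\<exists>us vs. ws = us @ vs \<and> \<bar>fst (wprod us) - w\<bar> \<le> R \<and>
           (\<forall>j<length us. fst (wprod (take j us)) < w)"
proof -
  define P where "P j \<longleftrightarrow> w \<le> fst (wprod (take j ws))" for j
  have Pl: "P (length ws)" using assms by (simp add: P_def)
  define j0 where "j0 = (LEAST j. P j)"
  have Pj0: "P j0" unfolding j0_def using Pl by (rule LeastI)
  have j0le: "j0 \<le> length ws" unfolding j0_def using Pl by (rule Least_le)
  have notP: "\<not> P j" if "j < j0" for j using that unfolding j0_def by (rule not_less_Least)
  show ?thesis
  proof (cases j0)
    case 0
    then have "w = 0" using Pj0 assms by (simp add: P_def)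
    then show ?thesis using R_nonneg by (intro exI[of _ "[]"] exI[of _ ws]) simp
  next
    case (Suc i)
    have il: "i < length ws" using Suc j0le by simp
    have tk: "take (Suc i) ws = take i ws @ [ws ! i]" using il by (simp add: take_Suc_conv_app_nth)
    have si: "ws ! i \<in> S" using il assms(1) nth_mem by blast
    have a: "fst (wprod (take i ws)) < w" using notP[of i] Suc by (simp add: P_def)
    have b: "w \<le> fst (wprod (take i ws)) + fst (ws ! i)"
      using Pj0 Suc by (simp add: P_def tk wprod_snoc_fst)
    have "\<bar>fst (wprod (take j0 ws)) - w\<bar> \<le> R"
      using a b R_fst[OF si] Suc by (simp add: tk wprod_snoc_fst)
    moreover have "\<forall>j<length (take j0 ws). fst (wprod (take j (take j0 ws))) < w"
      using notP j0le by (auto simp: P_def min_def not_le)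
    ultimately show ?thesis by (intro exI[of _ "take j0 ws"] exI[of _ "drop j0 ws"]) simp
  qed
qed

lemma prefix_lamps:
  assumes "set us \<subseteq> S" "\<forall>j<length us. fst (wprod (take j us)) < w" "w + R \<le> z"
  shows "snd (wprod us) z = 0"
  using assms
proof (induction us rule: rev_induct)
  case Nil then show ?case by simp
next
  case (snoc s xs)
  have "\<forall>j<length xs. fst (wprod (take j xs)) < w"
    using snoc.prems(2) by (metis butlast_snoc length_append_singleton less_SucI take_butlast)
  then have "snd (wprod xs) z = 0" using snoc by simp
  moreover have "fst (wprod xs) < w" using snoc.prems(2)[rule_format, of "length xs"] by simp
  then have "snd s (z - fst (wprod xs)) = 0" using R_snd[of s "z - fst (wprod xs)"] snoc.prems by force
  ultimately show ?case by (simp add: wprod_snoc_snd)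
qed

lemma visit2:
  assumes "set ws \<subseteq> S" "snd (wprod ws) v \<noteq> 0"
  shows "\<exists>us vs. ws = us @ vs \<and> \<bar>fst (wprod us) - v\<bar> \<le> R"
  using assms
proof (induction ws rule: rev_induct)
  case Nil then show ?case by simp
next
  case (snoc s xs)
  show ?case
  proof (cases "snd (wprod xs) v = 0")
    case True
    then have "snd s (v - fst (wprod xs)) \<noteq> 0" using snoc.prems by (simp add: wprod_snoc_snd)
    then have "\<bar>v - fst (wprod xs)\<bar> \<le> R" using R_snd[of s "v - fst (wprod xs)"] snoc.prems by simp
    then show ?thesis by (intro exI[of _ xs] exI[of _ "[s]"]) simp
  next
    case False
    then obtain us vs where "xs = us @ vs" "\<bar>fst (wprod us) - v\<bar> \<le> R" using snoc by auto
    then show ?thesis by (intro exI[of _ us] exI[of _ "vs @ [s]"]) simp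
  qed
qed

end

context wrS begin

lemma insertion:
  assumes "set us \<subseteq> S" "set vs \<subseteq> S" "length (us @ vs) = wl (wprod (us @ vs))"
  shows "\<exists>e'. wl (wr_mult (SS w e) (wprod (us @ vs)))
            \<le> wl (wprod (us @ vs)) + wl (SS (w - fst (wprod us)) e')"
proof -
  define a where "a = wprod us"
  define b where "b = wprod vs"
  obtain p \<alpha> where ap: "a = (p, \<alpha>)" by fastforce
  define t where "t = wr_mult (wr_mult (wr_inv a) (SS w e)) a"
  have t0: "t = (0, \<lambda>z. - \<alpha> (z + p) + (if z + p = w then e else 0) + \<alpha> (z + p))"
    by (simp add: t_def ap wr_mult_simps wr_inv_simps SS_def)
  have t: "t = SS (w - p) (snd t (w - p))"
    unfolding t0 SS_def by (auto simp: fun_eq_iff)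
  have ab: "wprod (us @ vs) = wr_mult a b" by (simp add: a_def b_def wprod_append)
  have eq: "wr_mult (SS w e) (wprod (us @ vs)) = wr_mult a (wr_mult t b)"
    by (simp add: ab t_def wr_mult_assoc)
  have ac: "a \<in> wr_carrier" "b \<in> wr_carrier" using assms wprod_carrier a_def b_def by auto
  have tc: "t \<in> wr_carrier" using t SS_carrier by metis
  have "wl (wr_mult (SS w e) (wprod (us @ vs))) \<le> wl a + (wl t + wl b)"
    unfolding eq using wl_mult[OF ac(1) carrier_mult[OF tc ac(2)]] wl_mult[OF tc ac(2)] by linarith
  also have "\<dots> \<le> length us + wl t + length vs"
    using wl_le[OF assms(1)] wl_le[OF assms(2)] a_def b_def by simp
  also have "\<dots> = wl (wprod (us @ vs)) + wl t" using assms(3) by simp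
  finally show ?thesis using t ap a_def by (intro exI[of _ "snd t (w - p)"]) simp
qed

definition D :: nat where "D = max (wl (1, \<lambda>_. 0)) (wl (-1, \<lambda>_. 0))"

lemma move_nat: "wl (int n, \<lambda>_. 0) \<le> D * n"
proof (induction n)
  case 0
  have "wl (wprod []) \<le> length ([] :: (int \<times> (int \<Rightarrow> 'f)) list)" by (rule wl_le) simp
  then show ?case by (simp add: wr_one_def)
next
  case (Suc n)
  have "(int (Suc n), \<lambda>_. 0) = wr_mult (1, \<lambda>_. 0) (int n, \<lambda>_. (0::'f))"
    by (simp add: wr_mult_simps)
  then have "wl (int (Suc n), \<lambda>_. 0) \<le> wl (1, \<lambda>_. 0) + wl (int n, \<lambda>_. (0::'f))"
    using wl_mult[OF move_carrier move_carrier] by metis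
  also have "\<dots> \<le> D + D * n" using Suc by (simp add: D_def)
  finally show ?case by simp
qed

lemma move_neg: "wl (- int n, \<lambda>_. 0) \<le> D * n"
proof (induction n)
  case 0
  have "wl (wprod []) \<le> length ([] :: (int \<times> (int \<Rightarrow> 'f)) list)" by (rule wl_le) simp
  then show ?case by (simp add: wr_one_def)
next
  case (Suc n)
  have "(- int (Suc n), \<lambda>_. 0) = wr_mult (-1, \<lambda>_. 0) (- int n, \<lambda>_. (0::'f))"
    by (simp add: wr_mult_simps)
  then have "wl (- int (Suc n), \<lambda>_. 0) \<le> wl (-1, \<lambda>_. 0) + wl (- int n, \<lambda>_. (0::'f))"
    using wl_mult[OF move_carrier move_carrier] by metis
  also have "\<dots> \<le> D + D * n" using Suc by (simp add: D_def)
  finally show ?case by simp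
qed

lemma move: "wl (k, \<lambda>_. 0) \<le> D * nat \<bar>k\<bar>"
proof (cases "k \<ge> 0")
  case True
  then show ?thesis using move_nat[of "nat k"] by simp
next
  case False
  then have "k = - int (nat \<bar>k\<bar>)" by simp
  then show ?thesis using move_neg[of "nat \<bar>k\<bar>"] by metis
qed

definition K0 :: nat where "K0 = Max (range (\<lambda>e. wl (SS 0 e)))"

lemma SS0_cost: "wl (SS 0 e) \<le> K0"
  unfolding K0_def by (rule Max_ge) auto

lemma SS_cost: "wl (SS j e) \<le> K0 + 2 * D * nat \<bar>j\<bar>"
proof -
  have eq: "SS j e = wr_mult (wr_mult (j, \<lambda>_. 0) (SS 0 e)) (- j, \<lambda>_. 0)"
    by (auto simp: SS_def wr_mult_simps fun_eq_iff)
  have "wl (SS j e) \<le> wl (wr_mult (j, \<lambda>_. 0) (SS 0 e)) + wl (- j, \<lambda>_. (0::'f))"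
    unfolding eq by (rule wl_mult) (auto intro!: carrier_mult)
  also have "\<dots> \<le> wl (j, \<lambda>_. (0::'f)) + wl (SS 0 e) + wl (- j, \<lambda>_. (0::'f))"
    using wl_mult[of "(j, \<lambda>_. 0)" "SS 0 e"] by simp
  also have "\<dots> \<le> D * nat \<bar>j\<bar> + K0 + D * nat \<bar>j\<bar>"
    using move[of j] move[of "-j"] SS0_cost[of e] by simp
  finally show ?thesis by simp
qed

lemma BD:
  assumes "g \<in> wr_carrier" "0 \<le> Q"
    and visit: "\<And>ws. set ws \<subseteq> S \<Longrightarrow> wprod ws = g \<Longrightarrow>
                  \<exists>us vs. ws = us @ vs \<and> \<bar>fst (wprod us) - w\<bar> \<le> Q"
  shows "wl (fst g, (snd g)(w := e)) \<le> wl g + K0 + 2 * D * nat Q"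
proof -
  obtain ws where ws: "set ws \<subseteq> S" "length ws = wl g" "wprod ws = g" using wl_opt assms by blast
  obtain us vs where uv: "ws = us @ vs" "\<bar>fst (wprod us) - w\<bar> \<le> Q" using visit ws by blast
  define e'' where "e'' = e + - snd g w"
  obtain e' where e': "wl (wr_mult (SS w e'') (wprod (us @ vs)))
            \<le> wl (wprod (us @ vs)) + wl (SS (w - fst (wprod us)) e')"
    using insertion[of us vs w e''] ws uv by auto
  have eq: "wr_mult (SS w e'') g = (fst g, (snd g)(w := e))"
    by (cases g) (auto simp: SS_def wr_mult_simps e''_def fun_eq_iff add.assoc)
  have "nat \<bar>w - fst (wprod us)\<bar> \<le> nat Q" using uv by simp
  then have "wl (SS (w - fst (wprod us)) e') \<le> K0 + 2 * D * nat Q"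
    using SS_cost[of "w - fst (wprod us)" e'] by (meson add_left_mono le_trans mult_le_mono2)
  then show ?thesis using e' eq ws uv by simp
qed

end

lemma shift_carrier:
  assumes "finite {z. f z \<noteq> 0}" shows "(k, \<lambda>z. f (z + c)) \<in> wr_carrier"
proof -
  have "{z. f (z + c) \<noteq> 0} \<subseteq> (\<lambda>z. z - c) ` {z. f z \<noteq> 0}"
    by (auto simp: image_iff) (metis add_diff_cancel)
  then show ?thesis using assms by (auto simp: wr_carrier_def intro: finite_subset)
qed

lemma upd_fin: "finite {z. f z \<noteq> 0} \<Longrightarrow> finite {z. (f(w := e)) z \<noteq> 0}"
  by (rule finite_subset[of _ "insert w {z. f z \<noteq> 0}"]) auto

lemma rc_fin: "finite {z. restr_conf \<phi> n z \<noteq> 0}"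
  by (rule finite_subset[of _ "{1..int n}"]) (auto simp: restr_conf_def split: if_splits)

lemma carrier_upd: "g \<in> wr_carrier \<Longrightarrow> (fst g, (snd g)(w := e)) \<in> wr_carrier"
  using upd_fin[of "snd g" w e] by (cases g) (auto simp: wr_carrier_def)

context wrS begin

lemma fst_bound: "set ws \<subseteq> S \<Longrightarrow> \<bar>fst (wprod ws)\<bar> \<le> R * int (length ws)"
proof (induction ws rule: rev_induct)
  case (snoc s xs)
  then have "\<bar>fst s\<bar> \<le> R" using R_fst by auto
  then show ?case using snoc by (simp add: wprod_snoc_fst algebra_simps)
qed simp

lemma visit3:
  assumes "set ws \<subseteq> S" "snd (wprod ws) v \<noteq> 0" "0 \<le> w" "w \<le> v"
  shows "\<exists>us vs. ws = us @ vs \<and> \<bar>fst (wprod us) - w\<bar> \<le> 2 * R"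
proof -
  obtain us0 vs0 where u0: "ws = us0 @ vs0" "\<bar>fst (wprod us0) - v\<bar> \<le> R"
    using visit2 assms by blast
  show ?thesis
  proof (cases "w \<le> fst (wprod us0)")
    case True
    have "set us0 \<subseteq> S" using assms u0 by auto
    then obtain us vs where "us0 = us @ vs" "\<bar>fst (wprod us) - w\<bar> \<le> R"
      using visit1[of us0 w] True assms by blast
    then show ?thesis using u0 R_nonneg by (intro exI[of _ us] exI[of _ "vs @ vs0"]) auto
  next
    case False
    then show ?thesis using u0 assms R_nonneg by (intro exI[of _ us0] exI[of _ vs0]) auto
  qed
qed

definition Kc :: nat where "Kc = K0 + 2 * D * nat (R + 1)"

lemma BD_near:
  assumes "g \<in> wr_carrier" "snd g v \<noteq> 0" "\<bar>w - v\<bar> \<le> 1"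
  shows "wl (fst g, (snd g)(w := e)) \<le> wl g + Kc"
proof -
  have "wl (fst g, (snd g)(w := e)) \<le> wl g + K0 + 2 * D * nat (R + 1)"
  proof (rule BD[OF assms(1)])
    show "0 \<le> R + 1" using R_nonneg by simp
    fix ws assume "set ws \<subseteq> S" "wprod ws = g"
    then obtain us vs where "ws = us @ vs" "\<bar>fst (wprod us) - v\<bar> \<le> R" using visit2 assms by blast
    then show "\<exists>us vs. ws = us @ vs \<and> \<bar>fst (wprod us) - w\<bar> \<le> R + 1" using assms(3) by auto
  qed
  then show ?thesis by (simp add: Kc_def)
qed

definition rel :: "(int \<Rightarrow> 'f) \<Rightarrow> int \<Rightarrow> 'f" where "rel \<phi> = (\<lambda>z. \<phi> (z + 1))"

definition Aq :: "nat \<Rightarrow> (int \<Rightarrow> 'f) \<Rightarrow> nat" where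
  "Aq n \<phi> = wl (int n - 1, rel (restr_conf \<phi> n))"
definition Bq :: "nat \<Rightarrow> (int \<Rightarrow> 'f) \<Rightarrow> nat" where
  "Bq n \<phi> = wl (0, rel (restr_conf \<phi> n))"

lemma Aq_TSP: "TSP S (restr_conf \<phi> n) 1 (int n) = Aq n \<phi>"
  by (simp add: TSP_wl Aq_def rel_def)
lemma Bq_TSP: "TSP S (restr_conf \<phi> n) 1 1 = Bq n \<phi>"
  by (simp add: TSP_wl Bq_def rel_def)

lemma rel_carrier: "finite {z. f z \<noteq> 0} \<Longrightarrow> (k, rel f) \<in> wr_carrier"
  unfolding rel_def by (rule shift_carrier)

lemma rc_upd: "z \<in> {1..int n} \<Longrightarrow> restr_conf (\<phi>(z := e)) n = (restr_conf \<phi> n)(z := e)"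
  by (auto simp: restr_conf_def fun_eq_iff)

lemma rel_upd: "rel (f(z := e)) = (rel f)(z - 1 := e)"
  by (auto simp: rel_def fun_eq_iff)

definition Kb :: nat where "Kb = K0 + 2 * D * nat R"

lemma Aq_BD:
  assumes "z \<in> {1..int n}" shows "Aq n (\<phi>(z := e)) \<le> Aq n \<phi> + Kb"
proof -
  let ?g = "(int n - 1, rel (restr_conf \<phi> n))"
  have gc: "?g \<in> wr_carrier" by (intro rel_carrier rc_fin)
  have "wl (fst ?g, (snd ?g)(z - 1 := e)) \<le> wl ?g + K0 + 2 * D * nat R"
  proof (rule BD[OF gc R_nonneg])
    fix ws assume "set ws \<subseteq> S" "wprod ws = ?g"
    then show "\<exists>us vs. ws = us @ vs \<and> \<bar>fst (wprod us) - (z - 1)\<bar> \<le> R"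
      using visit1[of ws "z - 1"] assms by auto
  qed
  then show ?thesis using assms by (simp add: Aq_def rc_upd rel_upd Kb_def)
qed

definition Ka :: nat where "Ka = K0 + 3 * D"

lemma SS_move_cost: "wl (wr_mult (SS j e) (k, \<lambda>_. 0)) \<le> K0 + 2 * D * nat \<bar>j\<bar> + D * nat \<bar>k\<bar>"
proof -
  have "wl (wr_mult (SS j e) (k, \<lambda>_. 0)) \<le> wl (SS j e) + wl (k, \<lambda>_. (0::'f))"
    by (rule wl_mult) auto
  then show ?thesis using SS_cost[of j e] move[of k] by linarith
qed

lemma Aq_step1: "Aq (Suc n) \<phi> \<le> Aq n \<phi> + Ka"
proof -
  let ?e = "\<phi> (int n + 1)"
  have eq: "(int (Suc n) - 1, rel (restr_conf \<phi> (Suc n))) =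
        wr_mult (int n - 1, rel (restr_conf \<phi> n)) (wr_mult (SS 1 ?e) (1, \<lambda>_. 0))"
    by (auto simp: wr_mult_simps SS_def rel_def restr_conf_def fun_eq_iff)
  have "Aq (Suc n) \<phi> \<le> Aq n \<phi> + wl (wr_mult (SS 1 ?e) (1, \<lambda>_. 0))"
    unfolding Aq_def eq by (rule wl_mult) (auto intro!: carrier_mult rel_carrier rc_fin)
  then show ?thesis using SS_move_cost[of 1 ?e 1] by (simp add: Ka_def)
qed

lemma Aq_step2: "Aq n \<phi> \<le> Aq (Suc n) \<phi> + Ka"
proof -
  let ?e = "- \<phi> (int n + 1)"
  have eq: "(int n - 1, rel (restr_conf \<phi> n)) =
        wr_mult (int (Suc n) - 1, rel (restr_conf \<phi> (Suc n))) (wr_mult (SS 0 ?e) (-1, \<lambda>_. 0))"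
    by (auto simp: wr_mult_simps SS_def rel_def restr_conf_def fun_eq_iff)
  have "Aq n \<phi> \<le> Aq (Suc n) \<phi> + wl (wr_mult (SS 0 ?e) (-1, \<lambda>_. 0))"
    unfolding Aq_def eq by (rule wl_mult) (auto intro!: carrier_mult rel_carrier rc_fin)
  then show ?thesis using SS_move_cost[of 0 ?e "-1"] by (simp add: Ka_def)
qed

lemma Aq_sub: "Aq (m + n) \<phi> \<le> Aq m \<phi> + Aq n (\<lambda>z. \<phi> (z + int m)) + D"
proof -
  have eq: "(int (m + n) - 1, rel (restr_conf \<phi> (m + n))) =
        wr_mult (wr_mult (int m - 1, rel (restr_conf \<phi> m)) (1, \<lambda>_. 0))
                (int n - 1, rel (restr_conf (\<lambda>z. \<phi> (z + int m)) n))"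
    by (auto simp: wr_mult_simps rel_def restr_conf_def fun_eq_iff)
  have "Aq (m + n) \<phi> \<le> wl (wr_mult (int m - 1, rel (restr_conf \<phi> m)) (1, \<lambda>_. 0)) + Aq n (\<lambda>z. \<phi> (z + int m))"
    unfolding Aq_def eq by (rule wl_mult) (auto intro!: carrier_mult rel_carrier rc_fin)
  also have "\<dots> \<le> Aq m \<phi> + wl (1, \<lambda>_. (0::'f)) + Aq n (\<lambda>z. \<phi> (z + int m))"
    using wl_mult[of "(int m - 1, rel (restr_conf \<phi> m))" "(1, \<lambda>_. 0)"]
    by (simp add: Aq_def rel_carrier rc_fin)
  finally show ?thesis using move[of 1] by simp
qed

lemma Aq_lower: "int n - 1 \<le> R * int (Aq n \<phi>)"
proof -
  obtain ws where ws: "set ws \<subseteq> S" "length ws = Aq n \<phi>" "wprod ws = (int n - 1, rel (restr_conf \<phi> n))"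
    using wl_opt[of "(int n - 1, rel (restr_conf \<phi> n))"] unfolding Aq_def
    by (auto intro: rel_carrier rc_fin)
  then show ?thesis using fst_bound[OF ws(1)] by simp
qed

lemma Aq_0: "Aq 0 \<phi> \<le> D"
proof -
  have "restr_conf \<phi> 0 = (\<lambda>_. 0)" by (auto simp: restr_conf_def fun_eq_iff)
  then show ?thesis using move[of "-1"] by (simp add: Aq_def rel_def)
qed

end

definition Mx :: "nat \<Rightarrow> (int \<Rightarrow> 'f::zero) \<Rightarrow> int" where
  "Mx n \<phi> = Max (insert 0 {z \<in> {1..int n}. \<phi> z \<noteq> 0})"

lemma Mx_props: "0 \<le> Mx n \<phi>" "Mx n \<phi> \<le> int n" "Mx n \<phi> \<noteq> 0 \<Longrightarrow> Mx n \<phi> \<in> {1..int n} \<and> \<phi> (Mx n \<phi>) \<noteq> 0"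
proof -
  have "{z \<in> {1..int n}. \<phi> z \<noteq> 0} \<subseteq> {1..int n}" by auto
  then have fin: "finite (insert 0 {z \<in> {1..int n}. \<phi> z \<noteq> 0})" using finite_subset by blast
  show "0 \<le> Mx n \<phi>" unfolding Mx_def using fin by (intro Max_ge) auto
  show "Mx n \<phi> \<le> int n" unfolding Mx_def using fin by (subst Max_le_iff) auto
  have "Mx n \<phi> \<in> insert 0 {z \<in> {1..int n}. \<phi> z \<noteq> 0}" unfolding Mx_def using fin by (intro Max_in) auto
  then show "Mx n \<phi> \<noteq> 0 \<Longrightarrow> Mx n \<phi> \<in> {1..int n} \<and> \<phi> (Mx n \<phi>) \<noteq> 0" by auto
qed

locale wrS0 = wrS S for S :: "(int \<times> (int \<Rightarrow> 'f::{finite,group_add})) set" +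
  fixes a0 :: 'f assumes a0: "a0 \<noteq> 0"
begin

definition Uc :: "nat \<Rightarrow> (int \<Rightarrow> 'f) \<Rightarrow> int \<Rightarrow> 'f" where
  "Uc n \<phi> = (restr_conf \<phi> n)(int n + 1 := a0)"
definition Uq :: "nat \<Rightarrow> (int \<Rightarrow> 'f) \<Rightarrow> nat" where
  "Uq n \<phi> = wl (0, rel (Uc n \<phi>))"

lemma Uc_fin: "finite {z. Uc n \<phi> z \<noteq> 0}"
  unfolding Uc_def by (intro upd_fin rc_fin)
lemma Ug_carrier: "(k, rel (Uc n \<phi>)) \<in> wr_carrier"
  by (intro rel_carrier Uc_fin)
lemma Uc_a0: "rel (Uc n \<phi>) (int n) = a0"
  by (simp add: rel_def Uc_def)

lemma Uq_BD:
  assumes "z \<in> {1..int n}" shows "Uq n (\<phi>(z := e)) \<le> Uq n \<phi> + (K0 + 2 * D * nat (2 * R))"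
proof -
  let ?g = "(0::int, rel (Uc n \<phi>))"
  have "wl (fst ?g, (snd ?g)(z - 1 := e)) \<le> wl ?g + K0 + 2 * D * nat (2 * R)"
  proof (rule BD[OF Ug_carrier])
    show "0 \<le> 2 * R" using R_nonneg by simp
    fix ws assume "set ws \<subseteq> S" "wprod ws = ?g"
    then show "\<exists>us vs. ws = us @ vs \<and> \<bar>fst (wprod us) - (z - 1)\<bar> \<le> 2 * R"
      using visit3[of ws "int n" "z - 1"] assms Uc_a0 a0 by auto
  qed
  moreover have "Uc n (\<phi>(z := e)) = (Uc n \<phi>)(z := e)" using assms
    by (auto simp: Uc_def restr_conf_def fun_eq_iff)
  ultimately show ?thesis by (simp add: Uq_def rel_upd)
qed

lemma Uq_step1: "Uq (Suc n) \<phi> \<le> Uq n \<phi> + 2 * Kc"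
proof -
  define g where "g = (0::int, rel (Uc n \<phi>))"
  define g1 where "g1 = (fst g, (snd g)(int n + 1 := a0))"
  define g2 where "g2 = (fst g1, (snd g1)(int n := \<phi> (int n + 1)))"
  have gc: "g \<in> wr_carrier" unfolding g_def by (rule Ug_carrier)
  have 1: "wl g1 \<le> wl g + Kc" unfolding g1_def
    by (rule BD_near[OF gc, of "int n"]) (auto simp: g_def Uc_a0 a0)
  have g1c: "g1 \<in> wr_carrier" unfolding g1_def using carrier_upd[OF gc] .
  have 2: "wl g2 \<le> wl g1 + Kc" unfolding g2_def
    by (rule BD_near[OF g1c, of "int n + 1"]) (auto simp: g1_def a0)
  have "g2 = (0, rel (Uc (Suc n) \<phi>))"
    by (auto simp: g2_def g1_def g_def rel_def Uc_def restr_conf_def fun_eq_iff)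
  then show ?thesis using 1 2 by (simp add: Uq_def g_def)
qed

lemma Uq_step2: "Uq n \<phi> \<le> Uq (Suc n) \<phi> + 2 * Kc"
proof -
  define g where "g = (0::int, rel (Uc (Suc n) \<phi>))"
  define g1 where "g1 = (fst g, (snd g)(int n := a0))"
  define g2 where "g2 = (fst g1, (snd g1)(int n + 1 := 0))"
  have gc: "g \<in> wr_carrier" unfolding g_def by (rule Ug_carrier)
  have 1: "wl g1 \<le> wl g + Kc" unfolding g1_def
    by (rule BD_near[OF gc, of "int n + 1"]) (auto simp: g_def rel_def Uc_def a0)
  have g1c: "g1 \<in> wr_carrier" unfolding g1_def using carrier_upd[OF gc] .
  have 2: "wl g2 \<le> wl g1 + Kc" unfolding g2_def
    by (rule BD_near[OF g1c, of "int n"]) (auto simp: g1_def a0)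
  have "g2 = (0, rel (Uc n \<phi>))"
    by (auto simp: g2_def g1_def g_def rel_def Uc_def restr_conf_def fun_eq_iff)
  then show ?thesis using 1 2 by (simp add: Uq_def g_def)
qed

lemma Uq_lower: "int n - R \<le> R * int (Uq n \<phi>)"
proof -
  obtain ws where ws: "set ws \<subseteq> S" "length ws = Uq n \<phi>" "wprod ws = (0, rel (Uc n \<phi>))"
    using wl_opt[OF Ug_carrier] unfolding Uq_def by blast
  obtain us vs where uv: "ws = us @ vs" "\<bar>fst (wprod us) - int n\<bar> \<le> R"
    using visit2[OF ws(1), of "int n"] ws Uc_a0 a0 by auto
  have "\<bar>fst (wprod us)\<bar> \<le> R * int (length us)" using fst_bound ws uv by simp
  moreover have "R * int (length us) \<le> R * int (length ws)" using uv R_nonneg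
    by (intro mult_left_mono) auto
  moreover have "int n - R \<le> fst (wprod us)" using uv(2) by (auto simp: abs_le_iff)
  moreover have "R * int (length ws) = R * int (Uq n \<phi>)" using ws by simp
  ultimately show ?thesis by (auto simp: abs_le_iff)
qed

lemma BU: "Bq n \<phi> \<le> Uq n \<phi> + Kc"
proof -
  have "wl (fst (0::int, rel (Uc n \<phi>)), (snd (0::int, rel (Uc n \<phi>)))(int n := 0)) \<le> wl (0, rel (Uc n \<phi>)) + Kc"
    by (rule BD_near[OF Ug_carrier, where v="int n"]) (auto simp: Uc_a0 a0)
  moreover have "(rel (Uc n \<phi>))(int n := 0) = rel (restr_conf \<phi> n)"
    by (auto simp: rel_def Uc_def restr_conf_def fun_eq_iff)
  ultimately show ?thesis by (simp add: Bq_def Uq_def)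
qed

lemma UB: "Uq n \<phi> \<le> Bq n \<phi> + (K0 + 2 * D * nat (int n - Mx n \<phi> + 1 + R))"
proof -
  let ?g = "(0::int, rel (restr_conf \<phi> n))"
  have gc: "?g \<in> wr_carrier" by (intro rel_carrier rc_fin)
  obtain ws where ws: "set ws \<subseteq> S" "length ws = wl ?g" "wprod ws = ?g"
    using wl_opt[OF gc] by blast
  have "\<exists>us vs. ws = us @ vs \<and> \<bar>int n - fst (wprod us)\<bar> \<le> int n - Mx n \<phi> + 1 + R"
  proof (cases "Mx n \<phi> = 0")
    case True
    then show ?thesis using R_nonneg by (intro exI[of _ "[]"] exI[of _ ws]) simp
  next
    case False
    then have M: "Mx n \<phi> \<in> {1..int n}" "\<phi> (Mx n \<phi>) \<noteq> 0" using Mx_props(3)[OF False] by auto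
    then have "snd (wprod ws) (Mx n \<phi> - 1) \<noteq> 0" using ws by (simp add: rel_def restr_conf_def)
    then obtain us vs where "ws = us @ vs" "\<bar>fst (wprod us) - (Mx n \<phi> - 1)\<bar> \<le> R"
      using visit2[OF ws(1)] by blast
    then show ?thesis using M by (intro exI[of _ us] exI[of _ vs]) auto
  qed
  then obtain us vs where uv: "ws = us @ vs" "\<bar>int n - fst (wprod us)\<bar> \<le> int n - Mx n \<phi> + 1 + R" by blast
  obtain e' where e': "wl (wr_mult (SS (int n) a0) (wprod (us @ vs)))
            \<le> wl (wprod (us @ vs)) + wl (SS (int n - fst (wprod us)) e')"
    using insertion[of us vs "int n" a0] ws uv by auto
  have eq: "wr_mult (SS (int n) a0) ?g = (0, rel (Uc n \<phi>))"
    by (auto simp: SS_def wr_mult_simps rel_def Uc_def restr_conf_def fun_eq_iff)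
  have "wl (SS (int n - fst (wprod us)) e') \<le> K0 + 2 * D * nat (int n - Mx n \<phi> + 1 + R)"
    using SS_cost[of "int n - fst (wprod us)" e'] uv(2)
    by (meson add_left_mono le_trans mult_le_mono2 nat_mono)
  then show ?thesis using e' eq ws uv by (simp add: Uq_def Bq_def)
qed

end

context wrS begin

lemma first_visit_split:
  assumes "set ws \<subseteq> S" "snd (wprod ws) m \<noteq> 0" "0 \<le> m"
  shows "\<exists>us vs. ws = us @ vs \<and> \<bar>fst (wprod us) - m\<bar> \<le> 2 * R \<and> (\<forall>z\<ge>m. snd (wprod us) z = 0)"
proof -
  obtain us0 vs0 where u0: "ws = us0 @ vs0" "\<bar>fst (wprod us0) - m\<bar> \<le> R"
    using visit2 assms by blast
  show ?thesis
  proof (cases "0 \<le> m - R")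
    case True
    have s0: "set us0 \<subseteq> S" using assms u0 by auto
    have "m - R \<le> fst (wprod us0)" using u0 by (auto simp: abs_le_iff)
    then obtain us vs where uv: "us0 = us @ vs" "\<bar>fst (wprod us) - (m - R)\<bar> \<le> R"
       "\<forall>j<length us. fst (wprod (take j us)) < m - R"
      using visit1[OF s0 True] by blast
    have su: "set us \<subseteq> S" using s0 uv by auto
    have "\<forall>z\<ge>m. snd (wprod us) z = 0"
      using prefix_lamps[OF su uv(3)] by auto
    then show ?thesis using u0 uv by (intro exI[of _ us] exI[of _ "vs @ vs0"]) (auto simp: abs_le_iff)
  next
    case False
    then show ?thesis using assms R_nonneg by (intro exI[of _ "[]"] exI[of _ ws]) auto
  qed
qed

end

context wrS0 begin

definition Kd :: nat where "Kd = K0 + 4 * D * nat (2 * R)"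

lemma Uq_sub_pos:
  assumes "n \<ge> 1"
  shows "Uq (m + n) \<phi> \<le> Uq m \<phi> + Uq n (\<lambda>z. \<phi> (z + int m)) + Kd"
proof -
  define \<psi> where "\<psi> = (\<lambda>z. \<phi> (z + int m))"
  define g1 where "g1 = (0::int, rel (Uc m \<phi>))"
  obtain ws where ws: "set ws \<subseteq> S" "length ws = Uq m \<phi>" "wprod ws = g1"
    using wl_opt[OF Ug_carrier] unfolding Uq_def g1_def by blast
  have "snd (wprod ws) (int m) \<noteq> 0" using ws Uc_a0 a0 by (simp add: g1_def)
  then obtain us vs where uv: "ws = us @ vs" "\<bar>fst (wprod us) - int m\<bar> \<le> 2 * R"
     "\<forall>z\<ge>int m. snd (wprod us) z = 0"
    using first_visit_split[OF ws(1) _ of_nat_0_le_iff] by blast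
  obtain p \<alpha> where ap: "wprod us = (p, \<alpha>)" by fastforce
  obtain q \<beta> where bq: "wprod vs = (q, \<beta>)" by fastforce
  have us: "set us \<subseteq> S" and vs: "set vs \<subseteq> S" using ws uv by auto
  have g1ab: "g1 = wr_mult (p, \<alpha>) (q, \<beta>)" using ws uv ap bq by (simp add: wprod_append)
  then have pq: "p + q = 0" and ab: "\<And>z. \<alpha> z + \<beta> (z - p) = rel (Uc m \<phi>) z"
    by (auto simp: g1_def wr_mult_simps fun_eq_iff)
  have \<alpha>0: "\<And>z. z \<ge> int m \<Longrightarrow> \<alpha> z = 0" using uv(3) ap by auto
  define chi where "chi = Uc n \<psi>"
  define x where "x = 1 + p - int m"
  define t where "t = (0::int, \<lambda>y. chi (y + x))"
  have teq: "t = wr_mult (wr_mult (1 - x, \<lambda>_. 0) (0, rel chi)) (x - 1, \<lambda>_. 0)"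
    by (auto simp: t_def wr_mult_simps rel_def fun_eq_iff)
  have tc: "t \<in> wr_carrier" unfolding t_def chi_def by (intro shift_carrier Uc_fin)
  have "wl t \<le> wl (wr_mult (1 - x, \<lambda>_. 0) (0, rel chi)) + wl (x - 1, \<lambda>_. (0::'f))"
    unfolding teq by (rule wl_mult) (auto intro!: carrier_mult simp: chi_def Ug_carrier)
  also have "\<dots> \<le> wl (1 - x, \<lambda>_. (0::'f)) + Uq n \<psi> + wl (x - 1, \<lambda>_. (0::'f))"
    using wl_mult[of "(1 - x, \<lambda>_. 0)" "(0, rel chi)"] by (simp add: chi_def Ug_carrier Uq_def)
  also have "\<dots> \<le> D * nat (2 * R) + Uq n \<psi> + D * nat (2 * R)"
  proof -
    have "nat \<bar>1 - x\<bar> \<le> nat (2 * R)" "nat \<bar>x - 1\<bar> \<le> nat (2 * R)" using uv(2) ap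
      by (auto simp: x_def abs_le_iff)
    then show ?thesis using move[of "1 - x"] move[of "x - 1"]
      by (meson add_mono add_right_mono le_trans mult_le_mono2)
  qed
  finally have wlt: "wl t \<le> Uq n \<psi> + 2 * D * nat (2 * R)" by simp
  define G where "G = wr_mult (p, \<alpha>) (wr_mult t (q, \<beta>))"
  have Gc: "G \<in> wr_carrier" unfolding G_def using wprod_carrier[OF us] wprod_carrier[OF vs] ap bq tc
    by (auto intro!: carrier_mult)
  have "wl G \<le> wl (p, \<alpha>) + (wl t + wl (q, \<beta>))"
    unfolding G_def using wl_mult[of "(p, \<alpha>)" "wr_mult t (q, \<beta>)"] wl_mult[of t "(q, \<beta>)"]
      wprod_carrier[OF us] wprod_carrier[OF vs] ap bq tc carrier_mult by fastforce
  also have "\<dots> \<le> length us + wl t + length vs"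
    using wl_le[OF us] wl_le[OF vs] ap bq by simp
  finally have wlG: "wl G \<le> Uq m \<phi> + wl t" using ws uv by simp
  have G: "G = (p + q, \<lambda>z. \<alpha> z + chi (z + 1 - int m) + \<beta> (z - p))"
    by (simp add: G_def t_def wr_mult_simps x_def algebra_simps)
  have Gout: "snd G z = rel (Uc (m + n) \<phi>) z" if "z \<noteq> int m" for z
  proof (cases "z > int m")
    case True
    have "\<alpha> z = 0" using \<alpha>0 True by simp
    moreover have "rel (Uc m \<phi>) z = 0" using True by (simp add: rel_def Uc_def restr_conf_def)
    ultimately have "\<beta> (z - p) = 0" using ab[of z] by simp
    then have "snd G z = chi (z + 1 - int m)" using \<open>\<alpha> z = 0\<close> G by simp
    also have "\<dots> = rel (Uc (m + n) \<phi>) z" using True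
      by (auto simp: chi_def \<psi>_def rel_def Uc_def restr_conf_def algebra_simps)
    finally show ?thesis .
  next
    case False
    then have zl: "z < int m" using that by simp
    then have "chi (z + 1 - int m) = 0" by (simp add: chi_def Uc_def restr_conf_def)
    then have "snd G z = rel (Uc m \<phi>) z" using G ab[of z] by simp
    also have "\<dots> = rel (Uc (m + n) \<phi>) z" using zl
      by (auto simp: rel_def Uc_def restr_conf_def)
    finally show ?thesis .
  qed
  have Gmn: "snd G (int m + int n) \<noteq> 0"
    using Gout[of "int m + int n"] assms Uc_a0[of "m + n" \<phi>] a0 by simp
  have "wl (fst G, (snd G)(int m := rel (Uc (m + n) \<phi>) (int m))) \<le> wl G + K0 + 2 * D * nat (2 * R)"
  proof (rule BD[OF Gc])
    show "0 \<le> 2 * R" using R_nonneg by simp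
    fix ws' assume "set ws' \<subseteq> S" "wprod ws' = G"
    then show "\<exists>us vs. ws' = us @ vs \<and> \<bar>fst (wprod us) - int m\<bar> \<le> 2 * R"
      using visit3[of ws' "int m + int n" "int m"] Gmn by auto
  qed
  moreover have "(fst G, (snd G)(int m := rel (Uc (m + n) \<phi>) (int m))) = (0, rel (Uc (m + n) \<phi>))"
    using Gout pq G by (auto simp: fun_eq_iff)
  ultimately have "Uq (m + n) \<phi> \<le> wl G + K0 + 2 * D * nat (2 * R)" by (simp add: Uq_def)
  then show ?thesis using wlG wlt by (simp add: Kd_def \<psi>_def)
qed

lemma Uq_sub: "Uq (m + n) \<phi> \<le> Uq m \<phi> + Uq n (\<lambda>z. \<phi> (z + int m)) + Kd"
  by (cases "n = 0") (auto intro: Uq_sub_pos)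

end

definition CfJ :: "int set \<Rightarrow> (int \<Rightarrow> 'f::{finite,group_add}) set" where
  "CfJ J = {\<phi>. \<forall>z. z \<notin> J \<longrightarrow> \<phi> z = 0}"

lemma finite_CfJ: "finite J \<Longrightarrow> finite (CfJ J :: (int \<Rightarrow> 'f::{finite,group_add}) set)"
proof -
  assume "finite J"
  have "(CfJ J :: (int \<Rightarrow> 'f) set) = {f. \<forall>x. (x \<in> J \<longrightarrow> f x \<in> UNIV) \<and> (x \<notin> J \<longrightarrow> f x = 0)}"
    by (auto simp: CfJ_def)
  moreover have "finite (UNIV :: 'f set)" by simp
  ultimately show ?thesis using finite_set_of_finite_funs[OF \<open>finite J\<close>, of "UNIV :: 'f set" 0] by simp
qed

lemma zero_CfJ[simp]: "(\<lambda>_. 0) \<in> CfJ J" by (simp add: CfJ_def)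
lemma CfJ_ne: "CfJ J \<noteq> {}" using zero_CfJ by blast
lemma card_CfJ_pos: "finite J \<Longrightarrow> card (CfJ J) > 0"
  using finite_CfJ CfJ_ne card_gt_0_iff by blast

lemma bij_insert:
  assumes "j \<notin> J"
  shows "bij_betw (\<lambda>(\<phi>, e). \<phi>(j := e)) (CfJ J \<times> UNIV) (CfJ (insert j J))"
  unfolding bij_betw_def
proof
  show "inj_on (\<lambda>(\<phi>, e). \<phi>(j := e)) (CfJ J \<times> UNIV)"
  proof (rule inj_onI, clarsimp)
    fix \<phi> e \<phi>' e' assume a: "\<phi> \<in> CfJ J" "\<phi>' \<in> CfJ J" "\<phi>(j := e) = \<phi>'(j := e')"
    have "e = e'" using fun_cong[OF a(3), of j] by simp
    moreover have "\<phi> z = \<phi>' z" for z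
    proof (cases "z = j")
      case True then show ?thesis using a assms by (simp add: CfJ_def)
    next
      case False then show ?thesis using fun_cong[OF a(3), of z] by simp
    qed
    ultimately show "\<phi> = \<phi>' \<and> e = e'" by auto
  qed
  show "(\<lambda>(\<phi>, e). \<phi>(j := e)) ` (CfJ J \<times> UNIV) = CfJ (insert j J)"
  proof
    show "(\<lambda>(\<phi>, e). \<phi>(j := e)) ` (CfJ J \<times> UNIV) \<subseteq> CfJ (insert j J)" by (auto simp: CfJ_def)
    show "CfJ (insert j J) \<subseteq> (\<lambda>(\<phi>, e). \<phi>(j := e)) ` (CfJ J \<times> UNIV)"
    proof
      fix y assume "y \<in> CfJ (insert j J)"
      then have "(y(j := 0), y j) \<in> CfJ J \<times> UNIV" "y = (\<lambda>(\<phi>, e). \<phi>(j := e)) (y(j := 0), y j)"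
        by (auto simp: CfJ_def)
      then show "y \<in> (\<lambda>(\<phi>, e). \<phi>(j := e)) ` (CfJ J \<times> UNIV)" by blast
    qed
  qed
qed

lemma sum_insert_split:
  assumes "finite J" "j \<notin> J"
  shows "(\<Sum>\<psi>\<in>CfJ (insert j J). F \<psi>) = (\<Sum>\<phi>\<in>CfJ J. \<Sum>e\<in>UNIV. F (\<phi>(j := e)))"
proof -
  have "(\<Sum>\<psi>\<in>CfJ (insert j J). F \<psi>) = (\<Sum>x\<in>CfJ J \<times> UNIV. F (case x of (\<phi>, e) \<Rightarrow> \<phi>(j := e)))"
    using sum.reindex_bij_betw[OF bij_insert[OF assms(2)], of F] by simp
  also have "\<dots> = (\<Sum>\<phi>\<in>CfJ J. \<Sum>e\<in>UNIV. F (\<phi>(j := e)))"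
    by (simp add: sum.cartesian_product case_prod_unfold)
  finally show ?thesis .
qed

lemma card_insert_CfJ:
  assumes "finite J" "j \<notin> J"
  shows "card (CfJ (insert j J) :: (int \<Rightarrow> 'f::{finite,group_add}) set) = card (CfJ J :: (int \<Rightarrow> 'f) set) * CARD('f)"
proof -
  have "bij_betw (\<lambda>(\<phi>, e). \<phi>(j := e)) (CfJ J \<times> (UNIV :: 'f set)) (CfJ (insert j J))"
    by (rule bij_insert) fact
  then show ?thesis using bij_betw_same_card by (fastforce simp: card_cartesian_product)
qed

lemma card_CfJ: "finite J \<Longrightarrow> card (CfJ J :: (int \<Rightarrow> 'f::{finite,group_add}) set) = CARD('f) ^ card J"
proof (induction J rule: finite_induct)
  case empty
  have "CfJ {} = {(\<lambda>_. 0) :: int \<Rightarrow> 'f}" by (auto simp: CfJ_def)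
  then show ?case by simp
next
  case (insert j J) then show ?case by (simp add: card_insert_CfJ)
qed

definition mean :: "int set \<Rightarrow> ((int \<Rightarrow> 'f::{finite,group_add}) \<Rightarrow> real) \<Rightarrow> real" where
  "mean J g = (\<Sum>\<phi>\<in>CfJ J. g \<phi>) / card (CfJ J :: (int \<Rightarrow> 'f) set)"

lemma avg_dev:
  fixes a :: "'f::{finite,group_add} \<Rightarrow> real"
  assumes "\<And>e e'. \<bar>a e - a e'\<bar> \<le> C"
  shows "\<bar>a e - (\<Sum>e'\<in>UNIV. a e') / real CARD('f)\<bar> \<le> C"
proof -
  have N: "real CARD('f) > 0" by simp
  have "a e - (\<Sum>e'\<in>UNIV. a e') / real CARD('f) = (\<Sum>e'\<in>UNIV. a e - a e') / real CARD('f)"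
    using N by (simp add: sum_subtractf field_simps)
  also have "\<bar>\<dots>\<bar> \<le> (\<Sum>e'\<in>UNIV. \<bar>a e - a e'\<bar>) / real CARD('f)"
    using N by (simp add: divide_right_mono sum_abs)
  also have "\<dots> \<le> (\<Sum>e'\<in>(UNIV::'f set). C) / real CARD('f)"
    using N assms by (intro divide_right_mono sum_mono) auto
  also have "\<dots> = C" using N by simp
  finally show ?thesis .
qed

lemma var_bound:
  fixes g :: "(int \<Rightarrow> 'f::{finite,group_add}) \<Rightarrow> real"
  assumes "finite J"
    and "\<And>\<phi> z e. \<phi> \<in> CfJ J \<Longrightarrow> z \<in> J \<Longrightarrow> \<bar>g (\<phi>(z := e)) - g \<phi>\<bar> \<le> C"
  shows "(\<Sum>\<phi>\<in>CfJ J. (g \<phi> - mean J g)^2) \<le> real (card (CfJ J :: (int \<Rightarrow> 'f) set)) * real (card J) * C^2"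
  using assms
proof (induction J arbitrary: g rule: finite_induct)
  case empty
  have "CfJ {} = {(\<lambda>_. 0) :: int \<Rightarrow> 'f}" by (auto simp: CfJ_def)
  then show ?case by (simp add: mean_def)
next
  case (insert j J)
  let ?N = "real CARD('f)"
  have N: "?N > 0" by simp
  define h where "h \<phi> = (\<Sum>e\<in>UNIV. g (\<phi>(j := e))) / ?N" for \<phi>
  have jJ: "\<phi> \<in> CfJ J \<Longrightarrow> \<phi>(j := e) \<in> CfJ (insert j J)" for \<phi> e by (auto simp: CfJ_def)
  have hBD: "\<bar>h (\<phi>(z := e)) - h \<phi>\<bar> \<le> C" if "\<phi> \<in> CfJ J" "z \<in> J" for \<phi> z e
  proof -
    have zj: "z \<noteq> j" using that insert by auto
    have "h (\<phi>(z := e)) - h \<phi> = (\<Sum>e'\<in>UNIV. g ((\<phi>(j := e'))(z := e)) - g (\<phi>(j := e'))) / ?N"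
      unfolding h_def using zj by (simp add: sum_subtractf diff_divide_distrib fun_upd_twist)
    also have "\<bar>\<dots>\<bar> \<le> (\<Sum>e'\<in>UNIV. \<bar>g ((\<phi>(j := e'))(z := e)) - g (\<phi>(j := e'))\<bar>) / ?N"
      using N by (simp add: divide_right_mono sum_abs)
    also have "\<dots> \<le> (\<Sum>e'\<in>(UNIV::'f set). C) / ?N"
    proof (intro divide_right_mono sum_mono)
      fix e' :: 'f
      have "\<phi>(j := e') \<in> CfJ (insert j J)" using jJ[OF that(1)] .
      moreover have "z \<in> insert j J" using that by simp
      ultimately show "\<bar>g ((\<phi>(j := e'))(z := e)) - g (\<phi>(j := e'))\<bar> \<le> C" by (rule insert.prems)
    qed (use N in simp)
    also have "\<dots> = C" using N by simp
    finally show ?thesis .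
  qed
  have IH: "(\<Sum>\<phi>\<in>CfJ J. (h \<phi> - mean J h)^2) \<le> real (card (CfJ J :: (int \<Rightarrow> 'f) set)) * real (card J) * C^2"
    by (rule insert.IH) (rule hBD)
  have cardI: "card (CfJ (insert j J) :: (int \<Rightarrow> 'f) set) = card (CfJ J :: (int \<Rightarrow> 'f) set) * CARD('f)"
    by (rule card_insert_CfJ) (use insert in auto)
  have cJ: "real (card (CfJ J :: (int \<Rightarrow> 'f) set)) > 0" using card_CfJ_pos insert by simp
  have mean_eq: "mean (insert j J) g = mean J h"
  proof -
    have "(\<Sum>\<psi>\<in>CfJ (insert j J). g \<psi>) = (\<Sum>\<phi>\<in>CfJ J. ?N * h \<phi>)"
      unfolding sum_insert_split[OF insert(1,2)] h_def using N by simp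
    then show ?thesis unfolding mean_def cardI using N by (simp add: sum_distrib_left[symmetric])
  qed
  define m where "m = mean J h"
  have inner: "(\<Sum>e\<in>UNIV. (g (\<phi>(j := e)) - m)^2) \<le> ?N * C^2 + ?N * (h \<phi> - m)^2"
    if "\<phi> \<in> CfJ J" for \<phi>
  proof -
    let ?a = "\<lambda>e. g (\<phi>(j := e))"
    have dev: "\<bar>?a e - h \<phi>\<bar> \<le> C" for e
      unfolding h_def
    proof (rule avg_dev)
      fix e e' :: 'f
      have 1: "\<bar>g ((\<phi>(j := e'))(j := e)) - g (\<phi>(j := e'))\<bar> \<le> C"
        by (rule insert.prems[OF jJ[OF that]]) simp
      then show "\<bar>?a e - ?a e'\<bar> \<le> C" by (simp only: fun_upd_upd)
    qed
    have sq: "(?a e - h \<phi>)^2 \<le> C^2" for e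
    proof -
      have "\<bar>?a e - h \<phi>\<bar> \<le> \<bar>C\<bar>" using dev[of e] by linarith
      then show ?thesis using abs_le_square_iff by blast
    qed
    have cross: "(\<Sum>e\<in>UNIV. (?a e - h \<phi>) * (h \<phi> - m)) = 0"
    proof -
      have "(\<Sum>e\<in>UNIV. ?a e - h \<phi>) = 0" using N by (simp add: sum_subtractf h_def)
      then show ?thesis by (simp add: sum_distrib_right[symmetric])
    qed
    have "(\<Sum>e\<in>UNIV. (?a e - m)^2) = (\<Sum>e\<in>UNIV. (?a e - h \<phi>)^2 + 2 * ((?a e - h \<phi>) * (h \<phi> - m)) + (h \<phi> - m)^2)"
      by (intro sum.cong refl) (simp add: power2_eq_square, algebra)
    also have "\<dots> = (\<Sum>e\<in>UNIV. (?a e - h \<phi>)^2) + 2 * (\<Sum>e\<in>UNIV. (?a e - h \<phi>) * (h \<phi> - m)) + ?N * (h \<phi> - m)^2"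
      by (simp add: sum.distrib sum_distrib_left)
    also have "\<dots> \<le> (\<Sum>e\<in>(UNIV::'f set). C^2) + ?N * (h \<phi> - m)^2"
    proof -
      have "(\<Sum>e\<in>UNIV. (?a e - h \<phi>)^2) \<le> (\<Sum>e\<in>(UNIV::'f set). C^2)" by (intro sum_mono sq)
      then show ?thesis using cross by simp
    qed
    finally show ?thesis by simp
  qed
  have "(\<Sum>\<psi>\<in>CfJ (insert j J). (g \<psi> - mean (insert j J) g)^2) = (\<Sum>\<phi>\<in>CfJ J. \<Sum>e\<in>UNIV. (g (\<phi>(j := e)) - m)^2)"
    unfolding sum_insert_split[OF insert(1,2)] mean_eq m_def ..
  also have "\<dots> \<le> (\<Sum>\<phi>\<in>CfJ J. ?N * C^2 + ?N * (h \<phi> - m)^2)"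
    using inner by (rule sum_mono)
  also have "\<dots> = real (card (CfJ J :: (int \<Rightarrow> 'f) set)) * ?N * C^2 + ?N * (\<Sum>\<phi>\<in>CfJ J. (h \<phi> - m)^2)"
    by (simp add: sum.distrib sum_distrib_left)
  also have "\<dots> \<le> real (card (CfJ J :: (int \<Rightarrow> 'f) set)) * ?N * C^2 + ?N * (real (card (CfJ J :: (int \<Rightarrow> 'f) set)) * real (card J) * C^2)"
    using IH N unfolding m_def by (intro add_left_mono mult_left_mono) auto
  also have "\<dots> = real (card (CfJ (insert j J) :: (int \<Rightarrow> 'f) set)) * real (card (insert j J)) * C^2"
  proof -
    have "real (card (CfJ (insert j J) :: (int \<Rightarrow> 'f) set)) = real (card (CfJ J :: (int \<Rightarrow> 'f) set)) * ?N"
      using cardI by simp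
    moreover have "real (card (insert j J)) = real (card J) + 1" using insert by simp
    ultimately show ?thesis by (simp add: ring_distribs)
  qed
  finally show ?case .
qed

lemma cheb_finite:
  fixes g :: "(int \<Rightarrow> 'f::{finite,group_add}) \<Rightarrow> real"
  assumes "finite J" "t > 0"
  shows "real (card {\<phi>\<in>CfJ J. t \<le> \<bar>g \<phi> - mean J g\<bar>}) * t^2 \<le> (\<Sum>\<phi>\<in>CfJ J. (g \<phi> - mean J g)^2)"
proof -
  let ?A = "{\<phi>\<in>CfJ J. t \<le> \<bar>g \<phi> - mean J g\<bar>}"
  have fin: "finite (CfJ J)" using finite_CfJ assms by blast
  have "real (card ?A) * t^2 = (\<Sum>\<phi>\<in>?A. t^2)" by simp
  also have "\<dots> \<le> (\<Sum>\<phi>\<in>?A. (g \<phi> - mean J g)^2)"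
  proof (rule sum_mono)
    fix \<phi> assume "\<phi> \<in> ?A"
    then have "t \<le> \<bar>g \<phi> - mean J g\<bar>" by simp
    then have "\<bar>t\<bar> \<le> \<bar>g \<phi> - mean J g\<bar>" using assms(2) by simp
    then show "t^2 \<le> (g \<phi> - mean J g)^2" using abs_le_square_iff by blast
  qed
  also have "\<dots> \<le> (\<Sum>\<phi>\<in>CfJ J. (g \<phi> - mean J g)^2)"
    using fin by (intro sum_mono2) auto
  finally show ?thesis .
qed


abbreviation Cf :: "nat \<Rightarrow> (int \<Rightarrow> 'f::{finite,group_add}) set" where
  "Cf n \<equiv> CfJ {1..int n}"

definition Expt :: "nat \<Rightarrow> ((int \<Rightarrow> 'f::{finite,group_add}) \<Rightarrow> real) \<Rightarrow> real" where
  "Expt n f = mean {1..int n} f"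

definition cjoin :: "nat \<Rightarrow> (int \<Rightarrow> 'f::{finite,group_add}) \<Rightarrow> (int \<Rightarrow> 'f) \<Rightarrow> int \<Rightarrow> 'f" where
  "cjoin m \<phi>1 \<phi>2 = (\<lambda>z. if z \<le> int m then \<phi>1 z else \<phi>2 (z - int m))"

lemma rc_Cf: "restr_conf \<omega> n \<in> Cf n"
  by (auto simp: restr_conf_def CfJ_def)
lemma rc_id: "\<phi> \<in> Cf n \<Longrightarrow> restr_conf \<phi> n = \<phi>"
  by (auto simp: restr_conf_def CfJ_def fun_eq_iff)

lemma bij_join:
  "bij_betw (\<lambda>(\<phi>1, \<phi>2). cjoin m \<phi>1 \<phi>2) (Cf m \<times> Cf n) (Cf (m + n) :: (int \<Rightarrow> 'f::{finite,group_add}) set)"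
  unfolding bij_betw_def
proof
  show "inj_on (\<lambda>(\<phi>1, \<phi>2). cjoin m \<phi>1 \<phi>2) (Cf m \<times> Cf n)"
  proof (rule inj_onI)
    fix x y assume xy: "x \<in> Cf m \<times> Cf n" "y \<in> Cf m \<times> Cf n"
      "(\<lambda>(\<phi>1, \<phi>2). cjoin m \<phi>1 \<phi>2) x = (\<lambda>(\<phi>1, \<phi>2). cjoin m \<phi>1 \<phi>2) y"
    obtain a b where x: "x = (a, b)" by fastforce
    obtain a' b' where y: "y = (a', b')" by fastforce
    have as: "a \<in> Cf m" "b \<in> Cf n" "a' \<in> Cf m" "b' \<in> Cf n" "cjoin m a b = cjoin m a' b'"
      using xy x y by auto
    have "a z = a' z" for z
    proof (cases "z \<le> int m")
      case True then show ?thesis using fun_cong[OF as(5), of z] by (simp add: cjoin_def)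
    next
      case False then show ?thesis using as by (simp add: CfJ_def)
    qed
    moreover have "b z = b' z" for z
    proof (cases "z \<ge> 1")
      case True then show ?thesis using fun_cong[OF as(5), of "z + int m"] by (simp add: cjoin_def)
    next
      case False then show ?thesis using as by (simp add: CfJ_def)
    qed
    ultimately show "x = y" using x y by (auto simp: fun_eq_iff)
  qed
  show "(\<lambda>(\<phi>1, \<phi>2). cjoin m \<phi>1 \<phi>2) ` (Cf m \<times> Cf n) = (Cf (m + n) :: (int \<Rightarrow> 'f) set)"
  proof
    show "(\<lambda>(\<phi>1, \<phi>2). cjoin m \<phi>1 \<phi>2) ` (Cf m \<times> Cf n) \<subseteq> (Cf (m + n) :: (int \<Rightarrow> 'f) set)"
      by (auto simp: CfJ_def cjoin_def)
    show "(Cf (m + n) :: (int \<Rightarrow> 'f) set) \<subseteq> (\<lambda>(\<phi>1, \<phi>2). cjoin m \<phi>1 \<phi>2) ` (Cf m \<times> Cf n)"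
    proof
      fix y :: "int \<Rightarrow> 'f" assume y: "y \<in> (Cf (m + n) :: (int \<Rightarrow> 'f) set)"
      have "y = cjoin m (restr_conf y m) (restr_conf (\<lambda>z. y (z + int m)) n)"
        using y by (auto simp: cjoin_def restr_conf_def CfJ_def fun_eq_iff)
      then show "y \<in> (\<lambda>(\<phi>1, \<phi>2). cjoin m \<phi>1 \<phi>2) ` (Cf m \<times> Cf n)"
        by (intro image_eqI[of _ _ "(restr_conf y m, restr_conf (\<lambda>z. y (z + int m)) n)"]) (simp_all add: rc_Cf)
    qed
  qed
qed

lemma sum_join:
  "(\<Sum>\<psi>\<in>Cf (m + n). F \<psi>) = (\<Sum>\<phi>1\<in>Cf m. \<Sum>\<phi>2\<in>Cf n. F (cjoin m \<phi>1 \<phi>2 :: int \<Rightarrow> 'f::{finite,group_add}))"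
proof -
  have "(\<Sum>\<psi>\<in>Cf (m + n). F \<psi>) = (\<Sum>x\<in>Cf m \<times> Cf n. F (case x of (\<phi>1, \<phi>2) \<Rightarrow> cjoin m \<phi>1 \<phi>2))"
    using sum.reindex_bij_betw[OF bij_join, of F] by simp
  also have "\<dots> = (\<Sum>\<phi>1\<in>Cf m. \<Sum>\<phi>2\<in>Cf n. F (cjoin m \<phi>1 \<phi>2))"
    by (simp add: sum.cartesian_product case_prod_unfold)
  finally show ?thesis .
qed

lemma card_Cf: "card (Cf n :: (int \<Rightarrow> 'f::{finite,group_add}) set) = CARD('f) ^ n"
  by (simp add: card_CfJ)

lemma rc_join1: "\<phi>1 \<in> Cf m \<Longrightarrow> restr_conf (cjoin m \<phi>1 \<phi>2) m = \<phi>1"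
  by (auto simp: restr_conf_def cjoin_def CfJ_def fun_eq_iff)
lemma rc_join2: "\<phi>2 \<in> Cf n \<Longrightarrow> restr_conf (\<lambda>z. cjoin m \<phi>1 \<phi>2 (z + int m)) n = \<phi>2"
  by (auto simp: restr_conf_def cjoin_def CfJ_def fun_eq_iff)

lemma Expt_dep1:
  fixes f :: "(int \<Rightarrow> 'f::{finite,group_add}) \<Rightarrow> real"
  assumes "\<And>\<phi>. f \<phi> = f (restr_conf \<phi> m)"
  shows "Expt (m + n) f = Expt m f"
proof -
  have "(\<Sum>\<psi>\<in>Cf (m + n). f \<psi>) = (\<Sum>\<phi>1\<in>Cf m. \<Sum>\<phi>2\<in>(Cf n :: (int \<Rightarrow> 'f) set). f \<phi>1)"
    unfolding sum_join by (intro sum.cong refl) (metis assms rc_join1)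
  also have "\<dots> = real (card (Cf n :: (int \<Rightarrow> 'f) set)) * (\<Sum>\<phi>1\<in>Cf m. f \<phi>1)"
    by (simp add: sum_distrib_left)
  finally show ?thesis unfolding Expt_def mean_def card_Cf
    by (simp add: power_add field_simps)
qed

lemma Expt_dep2:
  fixes f :: "(int \<Rightarrow> 'f::{finite,group_add}) \<Rightarrow> real"
  assumes "\<And>\<phi>. f \<phi> = f (restr_conf \<phi> n)"
  shows "Expt (m + n) (\<lambda>\<phi>. f (\<lambda>z. \<phi> (z + int m))) = Expt n f"
proof -
  have "(\<Sum>\<psi>\<in>Cf (m + n). f (\<lambda>z. \<psi> (z + int m))) = (\<Sum>\<phi>1\<in>(Cf m :: (int \<Rightarrow> 'f) set). \<Sum>\<phi>2\<in>Cf n. f \<phi>2)"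
    unfolding sum_join by (intro sum.cong refl) (metis assms rc_join2)
  also have "\<dots> = real (card (Cf m :: (int \<Rightarrow> 'f) set)) * (\<Sum>\<phi>2\<in>Cf n. f \<phi>2)"
    by simp
  finally show ?thesis unfolding Expt_def mean_def card_Cf
    by (simp add: power_add field_simps)
qed

lemma Expt_add: "Expt n (\<lambda>\<phi>. f \<phi> + g \<phi>) = Expt n f + Expt n g"
  by (simp add: Expt_def mean_def sum.distrib add_divide_distrib)
lemma Expt_const: "Expt n (\<lambda>_. c) = c"
  by (simp add: Expt_def mean_def card_Cf)
lemma Expt_mono: "(\<And>\<phi>. \<phi> \<in> Cf n \<Longrightarrow> f \<phi> \<le> g \<phi>) \<Longrightarrow> Expt n f \<le> Expt n g"
  unfolding Expt_def mean_def by (intro divide_right_mono sum_mono) auto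


lemma pps: "product_prob_space (\<lambda>_::int. measure_pmf (pmf_of_set (UNIV :: 'f::{finite,group_add} set)))"
  by (rule product_prob_spaceI) (rule prob_space_measure_pmf)

lemma prob_space_unif: "prob_space (unif_conf_measure :: (int \<Rightarrow> 'f::{finite,group_add}) measure)"
proof -
  interpret product_prob_space "\<lambda>_::int. measure_pmf (pmf_of_set (UNIV :: 'f set))" UNIV
    by (rule pps)
  show ?thesis unfolding unif_conf_measure_def by (rule P.prob_space_axioms)
qed

lemma space_unif: "space (unif_conf_measure :: (int \<Rightarrow> 'f::{finite,group_add}) measure) = UNIV"
  by (simp add: unif_conf_measure_def space_PiM PiE_UNIV_domain)

lemma cyl:
  fixes \<phi> :: "int \<Rightarrow> 'f::{finite,group_add}"
  assumes "finite J"
  shows "{\<omega>. \<forall>z\<in>J. \<omega> z = \<phi> z} \<in> sets (unif_conf_measure :: (int \<Rightarrow> 'f) measure)"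
    and "measure (unif_conf_measure :: (int \<Rightarrow> 'f) measure) {\<omega>. \<forall>z\<in>J. \<omega> z = \<phi> z} = (1 / real CARD('f)) ^ card J"
proof -
  interpret product_prob_space "\<lambda>_::int. measure_pmf (pmf_of_set (UNIV :: 'f set))" UNIV
    by (rule pps)
  let ?M = "\<lambda>_::int. measure_pmf (pmf_of_set (UNIV :: 'f set))"
  have eq: "{\<omega>. \<forall>z\<in>J. \<omega> z = \<phi> z} = prod_emb UNIV ?M J (\<Pi>\<^sub>E z\<in>J. {\<phi> z})"
    by (auto simp: prod_emb_iff PiE_iff)
  show "{\<omega>. \<forall>z\<in>J. \<omega> z = \<phi> z} \<in> sets (unif_conf_measure :: (int \<Rightarrow> 'f) measure)"
    unfolding eq unif_conf_measure_def using assms by (intro sets_PiM_I) auto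
  have "emeasure (Pi\<^sub>M UNIV ?M) (prod_emb UNIV ?M J (\<Pi>\<^sub>E z\<in>J. {\<phi> z})) = (\<Prod>z\<in>J. emeasure (?M z) {\<phi> z})"
    using assms by (intro emeasure_PiM_emb) auto
  also have "\<dots> = (\<Prod>z\<in>J. ennreal (1 / real CARD('f)))"
    by (simp add: emeasure_pmf_single)
  also have "\<dots> = ennreal ((1 / real CARD('f)) ^ card J)"
    by (simp add: ennreal_power)
  finally have "emeasure (unif_conf_measure :: (int \<Rightarrow> 'f) measure) {\<omega>. \<forall>z\<in>J. \<omega> z = \<phi> z} = ennreal ((1 / real CARD('f)) ^ card J)"
    unfolding eq unif_conf_measure_def .
  then show "measure (unif_conf_measure :: (int \<Rightarrow> 'f) measure) {\<omega>. \<forall>z\<in>J. \<omega> z = \<phi> z} = (1 / real CARD('f)) ^ card J"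
    by (simp add: measure_def)
qed

lemma event_prob:
  fixes B :: "(int \<Rightarrow> 'f::{finite,group_add}) set"
  assumes "B \<subseteq> Cf n"
  shows "{\<omega>. restr_conf \<omega> n \<in> B} \<in> sets (unif_conf_measure :: (int \<Rightarrow> 'f) measure)"
    and "measure (unif_conf_measure :: (int \<Rightarrow> 'f) measure) {\<omega>. restr_conf \<omega> n \<in> B} = real (card B) / real (card (Cf n :: (int \<Rightarrow> 'f) set))"
proof -
  let ?M = "unif_conf_measure :: (int \<Rightarrow> 'f) measure"
  let ?A = "\<lambda>\<phi>. {\<omega>. \<forall>z\<in>{1..int n}. \<omega> z = \<phi> z}"
  have finB: "finite B" using assms finite_CfJ[of "{1..int n}"] finite_subset by blast
  have eq: "{\<omega>. restr_conf \<omega> n \<in> B} = (\<Union>\<phi>\<in>B. ?A \<phi>)"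
  proof -
    have "restr_conf \<omega> n = \<phi> \<longleftrightarrow> (\<forall>z\<in>{1..int n}. \<omega> z = \<phi> z)" if "\<phi> \<in> B" for \<omega> \<phi>
      using that assms by (auto simp: restr_conf_def CfJ_def fun_eq_iff)
    then show ?thesis by (auto, metis)
  qed
  have sets: "?A ` B \<subseteq> sets ?M" using cyl(1) by blast
  show "{\<omega>. restr_conf \<omega> n \<in> B} \<in> sets ?M" unfolding eq using finB sets by blast
  have disj: "disjoint_family_on ?A B"
    unfolding disjoint_family_on_def
  proof (intro ballI impI)
    fix \<phi> \<phi>' assume a: "\<phi> \<in> B" "\<phi>' \<in> B" "\<phi> \<noteq> \<phi>'"
    then obtain z where z: "\<phi> z \<noteq> \<phi>' z" by (auto simp: fun_eq_iff)
    have "\<phi> \<in> Cf n" "\<phi>' \<in> Cf n" using a assms by auto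
    then have "z \<in> {1..int n}" using z unfolding CfJ_def by (metis (mono_tags, lifting) mem_Collect_eq)
    then show "?A \<phi> \<inter> ?A \<phi>' = {}" using z by auto
  qed
  have "measure ?M {\<omega>. restr_conf \<omega> n \<in> B} = (\<Sum>\<phi>\<in>B. measure ?M (?A \<phi>))"
    unfolding eq by (rule measure_finite_Union[OF finB sets disj]) (simp add: finite_measure.emeasure_finite[OF prob_space.axioms(1)[OF prob_space_unif]])
  also have "\<dots> = real (card B) * (1 / real CARD('f)) ^ n"
  proof -
    have "measure ?M (?A \<phi>) = (1 / real CARD('f)) ^ n" for \<phi>
      using cyl(2)[of "{1..int n}" \<phi>] by simp
    then show ?thesis by simp
  qed
  also have "\<dots> = real (card B) / real (card (Cf n :: (int \<Rightarrow> 'f) set))"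
    by (simp add: card_Cf power_one_over)
  finally show "measure ?M {\<omega>. restr_conf \<omega> n \<in> B} = real (card B) / real (card (Cf n :: (int \<Rightarrow> 'f) set))" .
qed


lemma sub_iter:
  fixes b :: "nat \<Rightarrow> real"
  assumes sub: "\<And>m n. b (m + n) \<le> b m + b n"
  shows "b (q * m + r) \<le> real q * b m + b r"
proof (induction q)
  case (Suc q)
  have "b (Suc q * m + r) = b (m + (q * m + r))" by (simp add: add.assoc)
  also have "\<dots> \<le> b m + b (q * m + r)" by (rule sub)
  also have "\<dots> \<le> b m + (real q * b m + b r)" using Suc by simp
  finally show ?case by (simp add: algebra_simps)
qed simp

lemma fekete:
  fixes b :: "nat \<Rightarrow> real"
  assumes sub: "\<And>m n. b (m + n) \<le> b m + b n" and nn: "\<And>n. b n \<ge> 0"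
  shows "\<exists>L. (\<lambda>n. b n / real n) \<longlonglongrightarrow> L"
proof -
  define S where "S = (\<lambda>n. b n / real n) ` {1..}"
  define L where "L = Inf S"
  have Sne: "S \<noteq> {}" by (auto simp: S_def)
  have bdd: "bdd_below S" unfolding S_def using nn by (intro bdd_belowI[of _ 0]) auto
  have low: "L \<le> b n / real n" if "n \<ge> 1" for n
    unfolding L_def using bdd that by (intro cInf_lower) (auto simp: S_def)
  have "(\<lambda>n. b n / real n) \<longlonglongrightarrow> L"
  proof (rule LIMSEQ_I)
    fix r :: real assume r: "r > 0"
    have "Inf S < L + r / 2" using r by (simp add: L_def)
    then obtain s where s: "s \<in> S" "s < L + r / 2" using cInf_less_iff[OF Sne bdd] by blast
    then obtain m where m: "m \<ge> 1" "b m / real m < L + r / 2" by (auto simp: S_def)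
    define B where "B = Max (b ` {..<m})"
    have B: "b i \<le> B" if "i < m" for i unfolding B_def using that by (intro Max_ge) auto
    have B0: "0 \<le> B" using B[of 0] nn[of 0] m by simp
    obtain N :: nat where N: "real N > 2 * B / r" using reals_Archimedean2 by blast
    show "\<exists>no. \<forall>n\<ge>no. norm (b n / real n - L) < r"
    proof (intro exI[of _ "max N 1"] allI impI)
      fix n assume n: "max N 1 \<le> n"
      then have n1: "n \<ge> 1" by simp
      have npos: "real n > 0" using n1 by simp
      define q where "q = n div m"
      define rr where "rr = n mod m"
      have nqr: "n = q * m + rr" by (simp add: q_def rr_def)
      have rrm: "rr < m" using m by (simp add: rr_def)
      have "b n \<le> real q * b m + b rr" using sub_iter[of b q m rr, OF sub] nqr by simp
      also have "\<dots> \<le> real q * b m + B" using B[OF rrm] by simp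
      finally have bn: "b n \<le> real q * b m + B" .
      have "real q * real m \<le> real n" using nqr by (simp flip: of_nat_mult)
      moreover have "real q * b m = (real q * real m) * (b m / real m)" using m by simp
      moreover have "0 \<le> b m / real m" using nn[of m] by simp
      ultimately have "real q * b m \<le> real n * (b m / real m)"
        by (metis mult_right_mono)
      with bn have "b n / real n \<le> b m / real m + B / real n"
        using npos by (simp add: field_simps)
      moreover have "B / real n < r / 2"
      proof -
        have "2 * B / r < real n" using N n by linarith
        then show ?thesis using r npos by (simp add: field_simps)
      qed
      ultimately have "b n / real n < L + r" using m by linarith
      moreover have "L \<le> b n / real n" using low n1 by simp
      ultimately show "norm (b n / real n - L) < r" by simp
    qed
  qed
  then show ?thesis by blast
qed

lemma interp:
  fixes a :: "nat \<Rightarrow> real"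
  assumes step: "\<And>n. \<bar>a (Suc n) - a n\<bar> \<le> C"
    and sq: "(\<lambda>k. a (k^2) / real (k^2)) \<longlonglongrightarrow> c"
  shows "(\<lambda>n. a n / real n) \<longlonglongrightarrow> c"
proof -
  define k where "k n = floor_sqrt n" for n
  have C0: "0 \<le> C" using step[of 0] by linarith
  have dist: "\<bar>a (i + d) - a i\<bar> \<le> C * real d" for i d
  proof (induction d)
    case (Suc d)
    have "\<bar>a (i + Suc d) - a i\<bar> \<le> \<bar>a (Suc (i + d)) - a (i + d)\<bar> + \<bar>a (i + d) - a i\<bar>" by simp
    also have "\<dots> \<le> C + C * real d" using step Suc by (intro add_mono) auto
    finally show ?case by (simp add: algebra_simps)
  qed simp
  have kle: "(k n)^2 \<le> n" for n by (simp add: k_def)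
  have kgt: "n \<le> (k n)^2 + 2 * k n" for n
    using Suc_floor_sqrt_power2_gt[of n] by (simp add: k_def power2_eq_square)
  have ksqrt: "real (k n) \<le> sqrt (real n)" for n
    using kle[of n] by (metis of_nat_le_iff of_nat_power real_le_rsqrt)
  have klim: "filterlim k at_top sequentially"
  proof (rule filterlim_at_top_mono[of "\<lambda>n. floor_sqrt n"])
    show "filterlim floor_sqrt at_top sequentially"
      unfolding filterlim_at_top
    proof
      fix Z :: nat
      show "eventually (\<lambda>n. Z \<le> floor_sqrt n) sequentially"
        using eventually_ge_at_top[of "Z^2"] by eventually_elim (simp add: le_floor_sqrtI)
    qed
  qed (simp add: k_def)
  have A1: "(\<lambda>n. a ((k n)^2) / real ((k n)^2)) \<longlonglongrightarrow> c"
    using filterlim_compose[OF sq klim] by (simp add: o_def)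
  have bound: "real n - real ((k n)^2) \<le> 2 * sqrt (real n)" for n
  proof -
    have "real n \<le> real ((k n)^2 + 2 * k n)" using kgt[of n] by (simp only: of_nat_le_iff)
    then have "real n \<le> real ((k n)^2) + 2 * real (k n)" by simp
    then show ?thesis using ksqrt[of n] by linarith
  qed
  have g0: "(\<lambda>n. 2 * (C + 1) / sqrt (real n)) \<longlonglongrightarrow> 0" by real_asymp
  have A2: "(\<lambda>n. real ((k n)^2) / real n) \<longlonglongrightarrow> 1"
  proof -
    have "(\<lambda>n. real ((k n)^2) / real n - 1) \<longlonglongrightarrow> 0"
    proof (rule Lim_null_comparison[OF _ g0])
      show "\<forall>\<^sub>F n in sequentially. norm (real ((k n)^2) / real n - 1) \<le> 2 * (C + 1) / sqrt (real n)"
        using eventually_ge_at_top[of 1]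
      proof eventually_elim
        case (elim n)
        have np: "real n > 0" using elim by simp
        have "norm (real ((k n)^2) / real n - 1) = (real n - real ((k n)^2)) / real n"
          using np kle[of n] by (simp add: field_simps abs_if of_nat_le_iff[symmetric] del: of_nat_le_iff)
        also have "\<dots> \<le> 2 * sqrt (real n) / real n" using bound[of n] np by (simp add: divide_right_mono)
        also have "\<dots> = 2 / sqrt (real n)" using np by (simp add: field_simps real_sqrt_mult_self flip: real_sqrt_mult)
        also have "\<dots> \<le> 2 * (C + 1) / sqrt (real n)" using np C0 by (simp add: divide_right_mono)
        finally show ?case .
      qed
    qed
    then show ?thesis using Lim_null by (simp add: LIM_zero_iff)
  qed
  have A3: "(\<lambda>n. (a n - a ((k n)^2)) / real n) \<longlonglongrightarrow> 0"
  proof (rule Lim_null_comparison[OF _ g0])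
    show "\<forall>\<^sub>F n in sequentially. norm ((a n - a ((k n)^2)) / real n) \<le> 2 * (C + 1) / sqrt (real n)"
      using eventually_ge_at_top[of 1]
    proof eventually_elim
      case (elim n)
      have np: "real n > 0" using elim by simp
      have "\<bar>a n - a ((k n)^2)\<bar> \<le> C * real (n - (k n)^2)"
        using dist[of "(k n)^2" "n - (k n)^2"] kle[of n] by simp
      also have "\<dots> \<le> C * (2 * sqrt (real n))" using bound[of n] kle[of n] C0
        by (intro mult_left_mono) (auto simp: of_nat_diff)
      finally have "norm ((a n - a ((k n)^2)) / real n) \<le> C * (2 * sqrt (real n)) / real n"
        using np by (simp add: divide_right_mono)
      also have "\<dots> = 2 * C / sqrt (real n)" using np by (simp add: field_simps real_sqrt_mult_self flip: real_sqrt_mult)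
      also have "\<dots> \<le> 2 * (C + 1) / sqrt (real n)" using np C0 by (simp add: divide_right_mono)
      finally show ?case .
    qed
  qed
  have "(\<lambda>n. a ((k n)^2) / real ((k n)^2) * (real ((k n)^2) / real n) + (a n - a ((k n)^2)) / real n) \<longlonglongrightarrow> c * 1 + 0"
    by (intro tendsto_intros A1 A2 A3)
  moreover have "eventually (\<lambda>n. a ((k n)^2) / real ((k n)^2) * (real ((k n)^2) / real n) + (a n - a ((k n)^2)) / real n = a n / real n) sequentially"
    using eventually_ge_at_top[of 1]
  proof eventually_elim
    case (elim n)
    have "k n \<ge> 1" using elim le_floor_sqrtI[of 1 n] by (simp add: k_def)
    then have "real ((k n)^2) \<noteq> 0" by simp
    then show ?case using elim by (simp add: field_simps)
  qed
  ultimately show ?thesis by (simp add: tendsto_cong)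
qed


lemma small_quot:
  fixes d :: "nat \<Rightarrow> real"
  assumes "\<And>j::nat. eventually (\<lambda>k. \<bar>d k\<bar> < real (k^2) / (real j + 1)) sequentially"
  shows "(\<lambda>k. d k / real (k^2)) \<longlonglongrightarrow> 0"
proof (rule LIMSEQ_I)
  fix r :: real assume r: "r > 0"
  obtain j :: nat where j: "inverse (real (Suc j)) < r" using reals_Archimedean[OF r] by blast
  have "eventually (\<lambda>k. norm (d k / real (k^2) - 0) < r) sequentially"
    using assms[of j] eventually_ge_at_top[of 1]
  proof eventually_elim
    case (elim k)
    have kp: "real (k^2) > 0" using elim by simp
    have "\<bar>d k\<bar> / real (k^2) < 1 / (real j + 1)" using elim kp by (simp add: field_simps)
    also have "\<dots> < r" using j by (simp add: inverse_eq_divide add.commute)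
    finally show ?case by (simp add: abs_divide)
  qed
  then show "\<exists>no. \<forall>n\<ge>no. norm (d n / real (n^2) - 0) < r"
    by (simp add: eventually_sequentially)
qed

theorem abstract_limit:
  fixes X :: "nat \<Rightarrow> (int \<Rightarrow> 'f::{finite,group_add}) \<Rightarrow> real" and C :: real
  assumes H1: "\<And>n \<phi>. X n \<phi> = X n (restr_conf \<phi> n)"
    and H2: "\<And>n \<phi> z e. z \<in> {1..int n} \<Longrightarrow> \<bar>X n (\<phi>(z := e)) - X n \<phi>\<bar> \<le> C"
    and H3: "\<And>n \<phi>. \<bar>X (Suc n) \<phi> - X n \<phi>\<bar> \<le> C"
    and H4: "\<And>m n \<phi>. X (m + n) \<phi> \<le> X m \<phi> + X n (\<lambda>z. \<phi> (z + int m)) + C"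
    and H5: "\<And>n \<phi>. X n \<phi> \<ge> 0"
  shows "\<exists>c. (\<lambda>n. Expt n (X n) / real n) \<longlonglongrightarrow> c \<and>
             (AE \<omega> in (unif_conf_measure :: (int \<Rightarrow> 'f) measure). (\<lambda>n. X n \<omega> / real n) \<longlonglongrightarrow> c)"
proof -
  let ?M = "unif_conf_measure :: (int \<Rightarrow> 'f) measure"
  interpret P: prob_space ?M by (rule prob_space_unif)
  define e where "e n = Expt n (X n)" for n
  have C0: "0 \<le> C" using H3[of 0 "\<lambda>_. 0"] by linarith
  have esub: "e (m + n) \<le> e m + e n + C" for m n
  proof -
    have "e (m + n) \<le> Expt (m + n) (\<lambda>\<phi>. (X m \<phi> + X n (\<lambda>z. \<phi> (z + int m))) + C)"
      unfolding e_def by (rule Expt_mono) (rule H4)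
    also have "\<dots> = Expt (m + n) (X m) + Expt (m + n) (\<lambda>\<phi>. X n (\<lambda>z. \<phi> (z + int m))) + C"
      by (simp add: Expt_add Expt_const)
    also have "Expt (m + n) (X m) = e m" unfolding e_def by (rule Expt_dep1) (rule H1)
    also have "Expt (m + n) (\<lambda>\<phi>. X n (\<lambda>z. \<phi> (z + int m))) = e n" unfolding e_def by (rule Expt_dep2) (rule H1)
    finally show ?thesis .
  qed
  have enn: "0 \<le> e n" for n
  proof -
    have "Expt n (\<lambda>_::int \<Rightarrow> 'f. 0) \<le> e n" unfolding e_def by (rule Expt_mono) (rule H5)
    then show ?thesis by (simp add: Expt_const)
  qed
  obtain L where L0: "(\<lambda>n. (e n + C) / real n) \<longlonglongrightarrow> L"
    using fekete[of "\<lambda>n. e n + C"] esub enn C0 by (fastforce simp: algebra_simps)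
  have CL: "(\<lambda>n. C / real n) \<longlonglongrightarrow> 0" by real_asymp
  have "(\<lambda>n. (e n + C) / real n - C / real n) \<longlonglongrightarrow> L - 0"
    by (intro tendsto_intros L0 CL)
  then have L: "(\<lambda>n. e n / real n) \<longlonglongrightarrow> L" by (simp add: diff_divide_distrib[symmetric])
  \<comment> \<open>Borel--Cantelli along squares\<close>
  have AEj: "AE \<omega> in ?M. eventually (\<lambda>k. \<bar>X (k^2) \<omega> - e (k^2)\<bar> < real (k^2) / (real j + 1)) sequentially"
    for j :: nat
  proof -
    define t where "t k = real (k^2) / (real j + 1)" for k :: nat
    define B where "B k = {\<phi> \<in> Cf (k^2). t k \<le> \<bar>X (k^2) \<phi> - e (k^2)\<bar>}" for k :: nat
    define A where "A k = {\<omega>. restr_conf \<omega> (k^2) \<in> (B k :: (int \<Rightarrow> 'f) set)}" for k :: nat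
    have BC: "B k \<subseteq> Cf (k^2)" for k by (auto simp: B_def)
    have Asets: "A k \<in> sets ?M" for k unfolding A_def by (rule event_prob(1)[OF BC])
    have Aeq: "A k = {\<omega>. t k \<le> \<bar>X (k^2) \<omega> - e (k^2)\<bar>}" for k
    proof -
      have "restr_conf \<omega> (k^2) \<in> Cf (k^2)" "X (k^2) (restr_conf \<omega> (k^2)) = X (k^2) \<omega>" for \<omega> :: "int \<Rightarrow> 'f"
        using rc_Cf H1 by metis+
      then show ?thesis unfolding A_def B_def by (intro set_eqI) (simp only: mem_Collect_eq, metis)
    qed
    have Abound: "P.prob (A k) \<le> C^2 * (real j + 1)^2 * inverse (real k ^ 2)" if k1: "k \<ge> 1" for k
    proof -
      let ?J = "{1..int (k^2)}"
      have tpos: "t k > 0" using k1 by (simp add: t_def)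
      have cJ: "card ?J = k^2" by (simp del: of_nat_power add: of_nat_power[symmetric])
      have Npos: "real (card (Cf (k^2) :: (int \<Rightarrow> 'f) set)) > 0" by (subst card_Cf) simp
      have me: "mean ?J (X (k^2)) = e (k^2)" by (simp add: e_def Expt_def)
      have "real (card (B k)) * (t k)^2 \<le> (\<Sum>\<phi>\<in>Cf (k^2). (X (k^2) \<phi> - mean ?J (X (k^2)))^2)"
        unfolding B_def me[symmetric] by (rule cheb_finite) (use tpos in auto)
      also have "\<dots> \<le> real (card (Cf (k^2) :: (int \<Rightarrow> 'f) set)) * real (card ?J) * C^2"
        by (rule var_bound) (auto intro: H2)
      finally have 1: "real (card (B k)) * (t k)^2 \<le> real (card (Cf (k^2) :: (int \<Rightarrow> 'f) set)) * real (k^2) * C^2"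
        using cJ by simp
      have "P.prob (A k) = real (card (B k)) / real (card (Cf (k^2) :: (int \<Rightarrow> 'f) set))"
        unfolding A_def by (rule event_prob(2)[OF BC])
      also have "\<dots> \<le> real (k^2) * C^2 / (t k)^2"
        using 1 Npos tpos by (simp add: field_simps)
      also have "\<dots> = C^2 * (real j + 1)^2 * inverse (real k ^ 2)"
        using k1 by (simp add: t_def field_simps power2_eq_square)
      finally show ?thesis .
    qed
    have summ: "summable (\<lambda>k. P.prob (A k))"
    proof (rule summable_comparison_test')
      show "summable (\<lambda>k. C^2 * (real j + 1)^2 * inverse (real k ^ 2))"
        by (intro summable_mult inverse_power_summable) simp
      show "norm (P.prob (A k)) \<le> C^2 * (real j + 1)^2 * inverse (real k ^ 2)" if "k \<ge> 1" for k
        using Abound[OF that] by simp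
    qed
    have "AE \<omega> in ?M. eventually (\<lambda>k. \<omega> \<in> space ?M - A k) sequentially"
      by (rule borel_cantelli_AE1[OF Asets]) (simp_all add: summ P.emeasure_eq_measure)
    then show ?thesis
    proof (rule AE_mp, intro AE_I2 impI)
      fix \<omega> assume "eventually (\<lambda>k. \<omega> \<in> space ?M - A k) sequentially"
      then show "eventually (\<lambda>k. \<bar>X (k^2) \<omega> - e (k^2)\<bar> < real (k^2) / (real j + 1)) sequentially"
        by eventually_elim (auto simp: Aeq t_def)
    qed
  qed
  then have "AE \<omega> in ?M. \<forall>j::nat. eventually (\<lambda>k. \<bar>X (k^2) \<omega> - e (k^2)\<bar> < real (k^2) / (real j + 1)) sequentially"
    by (subst AE_all_countable) auto
  then have "AE \<omega> in ?M. (\<lambda>n. X n \<omega> / real n) \<longlonglongrightarrow> L"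
  proof (rule AE_mp, intro AE_I2 impI)
    fix \<omega> assume as: "\<forall>j::nat. eventually (\<lambda>k. \<bar>X (k^2) \<omega> - e (k^2)\<bar> < real (k^2) / (real j + 1)) sequentially"
    have d0: "(\<lambda>k. (X (k^2) \<omega> - e (k^2)) / real (k^2)) \<longlonglongrightarrow> 0"
      by (rule small_quot) (use as in auto)
    have sqlim: "filterlim (\<lambda>k::nat. k^2) at_top sequentially"
      by (rule filterlim_subseq) (auto simp: strict_mono_def power_strict_mono)
    have e2: "(\<lambda>k. e (k^2) / real (k^2)) \<longlonglongrightarrow> L"
      using filterlim_compose[OF L sqlim] by (simp add: o_def)
    have "(\<lambda>k. (X (k^2) \<omega> - e (k^2)) / real (k^2) + e (k^2) / real (k^2)) \<longlonglongrightarrow> 0 + L"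
      by (intro tendsto_intros d0 e2)
    then have "(\<lambda>k. X (k^2) \<omega> / real (k^2)) \<longlonglongrightarrow> L"
      by (simp add: diff_divide_distrib)
    then show "(\<lambda>n. X n \<omega> / real n) \<longlonglongrightarrow> L"
      by (rule interp[rotated]) (rule H3)
  qed
  then show ?thesis using L unfolding e_def by blast
qed


lemma Mx_ge: "z \<in> {1..int n} \<Longrightarrow> \<phi> z \<noteq> 0 \<Longrightarrow> z \<le> Mx n \<phi>"
proof -
  assume a: "z \<in> {1..int n}" "\<phi> z \<noteq> 0"
  have "{z \<in> {1..int n}. \<phi> z \<noteq> 0} \<subseteq> {1..int n}" by auto
  then have fin: "finite (insert 0 {z \<in> {1..int n}. \<phi> z \<noteq> 0})" using finite_subset by blast
  show ?thesis unfolding Mx_def using fin a by (intro Max_ge) auto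
qed

lemma two_pow_ge:
  assumes "n \<ge> 1"
  shows "real n ^ 2 \<le> 2 ^ nat \<lceil>2 * log 2 (real n)\<rceil>"
proof -
  have np: "real n > 0" using assms by simp
  have l0: "0 \<le> 2 * log 2 (real n)" using assms by simp
  have "real n ^ 2 = (2 powr (log 2 (real n))) ^ 2" using np by simp
  also have "\<dots> = (2 powr (log 2 (real n))) powr (real 2)" by (subst powr_realpow) auto
  also have "\<dots> = 2 powr (2 * log 2 (real n))" by (simp add: powr_powr mult.commute)
  also have "\<dots> \<le> 2 powr (real (nat \<lceil>2 * log 2 (real n)\<rceil>))"
    using l0 by (intro powr_mono) linarith+
  also have "\<dots> = 2 ^ nat \<lceil>2 * log 2 (real n)\<rceil>" by (simp add: powr_realpow)
  finally show ?thesis .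
qed

lemma gap_AE:
  assumes "CARD('f::{finite,group_add}) \<ge> 2"
  shows "AE \<omega> in (unif_conf_measure :: (int \<Rightarrow> 'f) measure).
           (\<lambda>n. real_of_int (int n - Mx n \<omega>) / real n) \<longlonglongrightarrow> 0"
proof -
  let ?M = "unif_conf_measure :: (int \<Rightarrow> 'f) measure"
  interpret P: prob_space ?M by (rule prob_space_unif)
  define k where "k n = nat \<lceil>2 * log 2 (real n)\<rceil>" for n :: nat
  define J where "J n = {int n - int (k n) + 1 .. int n}" for n
  define E where "E n = {\<omega> :: int \<Rightarrow> 'f. \<forall>z\<in>J n. \<omega> z = 0}" for n
  have cardJ: "card (J n) = k n" for n by (simp add: J_def)
  have Esets: "E n \<in> sets ?M" for n unfolding E_def using cyl(1)[of "J n" "\<lambda>_. 0"] by (simp add: J_def)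
  have Eprob: "P.prob (E n) = (1 / real CARD('f)) ^ k n" for n
    unfolding E_def using cyl(2)[of "J n" "\<lambda>_. 0"] by (simp add: J_def cardJ)
  have glim: "(\<lambda>n. (2 * log 2 (real n) + 1) / real n) \<longlonglongrightarrow> 0" by real_asymp
  have ev_kn: "eventually (\<lambda>n. real (k n) \<le> 2 * log 2 (real n) + 1 \<and> k n \<le> n) sequentially"
  proof -
    have "eventually (\<lambda>n. (2 * log 2 (real n) + 1) / real n < 1) sequentially"
      using order_tendstoD(2)[OF glim, of 1] by simp
    then show ?thesis using eventually_ge_at_top[of 1]
    proof eventually_elim
      case (elim n)
      have np: "real n > 0" using elim by simp
      have l0: "0 \<le> 2 * log 2 (real n)" using elim by simp
      have "real (k n) \<le> 2 * log 2 (real n) + 1" unfolding k_def using l0 by linarith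
      moreover have "2 * log 2 (real n) + 1 < real n" using elim np by (simp add: field_simps)
      ultimately show ?case by simp
    qed
  qed
  have summ: "summable (\<lambda>n. P.prob (E n))"
  proof (rule summable_comparison_test')
    show "summable (\<lambda>n. inverse (real n ^ 2))" by (rule inverse_power_summable) simp
    show "norm (P.prob (E n)) \<le> inverse (real n ^ 2)" if "n \<ge> 1" for n
    proof -
      have N: "1 / real CARD('f) \<le> 1 / 2" using assms by (simp add: field_simps)
      have "P.prob (E n) = (1 / real CARD('f)) ^ k n" by (rule Eprob)
      also have "\<dots> \<le> (1 / 2) ^ k n" using N by (intro power_mono) auto
      also have "\<dots> = inverse (2 ^ k n)" by (simp add: power_one_over inverse_eq_divide)
      also have "\<dots> \<le> inverse (real n ^ 2)"
        using two_pow_ge[OF that] that by (intro le_imp_inverse_le) (auto simp: k_def)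
      finally show ?thesis by simp
    qed
  qed
  have "AE \<omega> in ?M. eventually (\<lambda>n. \<omega> \<in> space ?M - E n) sequentially"
    by (rule borel_cantelli_AE1[OF Esets]) (simp_all add: summ P.emeasure_eq_measure)
  then show ?thesis
  proof (rule AE_mp, intro AE_I2 impI)
    fix \<omega> :: "int \<Rightarrow> 'f" assume ev: "eventually (\<lambda>n. \<omega> \<in> space ?M - E n) sequentially"
    show "(\<lambda>n. real_of_int (int n - Mx n \<omega>) / real n) \<longlonglongrightarrow> 0"
    proof (rule Lim_null_comparison[OF _ glim])
      show "\<forall>\<^sub>F n in sequentially. norm (real_of_int (int n - Mx n \<omega>) / real n) \<le> (2 * log 2 (real n) + 1) / real n"
        using ev ev_kn eventually_ge_at_top[of 1]
      proof eventually_elim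
        case (elim n)
        have np: "real n > 0" using elim by simp
        obtain z where z: "z \<in> J n" "\<omega> z \<noteq> 0" using elim(1) by (auto simp: E_def)
        have z1: "z \<in> {1..int n}" using z elim(2) by (auto simp: J_def)
        have "z \<le> Mx n \<omega>" using Mx_ge[of z n \<omega>] z1 z(2) by blast
        then have "int n - Mx n \<omega> \<le> int (k n)" using z by (auto simp: J_def)
        moreover have "0 \<le> int n - Mx n \<omega>" using Mx_props(2)[of n \<omega>] by simp
        ultimately have "\<bar>real_of_int (int n - Mx n \<omega>)\<bar> \<le> real (k n)" by linarith
        also have "\<dots> \<le> 2 * log 2 (real n) + 1" using elim(2) by simp
        finally show ?case using np by (simp add: divide_right_mono abs_divide)
      qed
    qed
  qed
qed


lemma rc_rc: "restr_conf (restr_conf \<phi> n) n = restr_conf \<phi> n"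
  by (auto simp: restr_conf_def fun_eq_iff)

lemma upd_back: "(\<phi>(z := e))(z := \<phi> z) = \<phi>" by simp

context wrS0 begin

lemma R_pos: "R > 0"
proof -
  have "int 2 - 1 \<le> R * int (Aq 2 (\<lambda>_. 0))" by (rule Aq_lower)
  then show ?thesis using R_nonneg by (cases "R = 0") auto
qed

lemma main:
  assumes card2: "CARD('f) \<ge> 2"
  shows "\<exists>c1 c2 :: real. c1 > 0 \<and> c2 > 0 \<and>
    (AE \<omega> in unif_conf_measure.
       (\<lambda>n. real (TSP S (restr_conf \<omega> n) 1 1) / real n) \<longlonglongrightarrow> c1) \<and>
    (AE \<omega> in unif_conf_measure.
       (\<lambda>n. real (TSP S (restr_conf \<omega> n) 1 (int n)) / real n) \<longlonglongrightarrow> c2)"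
proof -
  let ?M = "unif_conf_measure :: (int \<Rightarrow> 'f) measure"
  have Rp: "real_of_int R > 0" using R_pos by simp
  define CA where "CA = real (max Kb (max Ka D))"
  obtain cA where cA: "(\<lambda>n. Expt n (\<lambda>\<phi>. real (Aq n \<phi>)) / real n) \<longlonglongrightarrow> cA"
    "AE \<omega> in ?M. (\<lambda>n. real (Aq n \<omega>) / real n) \<longlonglongrightarrow> cA"
  proof -
    have "\<exists>c. (\<lambda>n. Expt n (\<lambda>\<phi>. real (Aq n \<phi>)) / real n) \<longlonglongrightarrow> c \<and>
             (AE \<omega> in ?M. (\<lambda>n. real (Aq n \<omega>) / real n) \<longlonglongrightarrow> c)"
    proof (rule abstract_limit[where C = CA])
      show "real (Aq n \<phi>) = real (Aq n (restr_conf \<phi> n))" for n \<phi> by (simp add: Aq_def rc_rc)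
      show "\<bar>real (Aq n (\<phi>(z := e))) - real (Aq n \<phi>)\<bar> \<le> CA" if "z \<in> {1..int n}" for n \<phi> z e
      proof -
        have "Aq n (\<phi>(z := e)) \<le> Aq n \<phi> + Kb" using Aq_BD[OF that] .
        moreover have "Aq n \<phi> \<le> Aq n (\<phi>(z := e)) + Kb" using Aq_BD[OF that, of "\<phi>(z := e)" "\<phi> z"] by simp
        ultimately show ?thesis by (simp add: CA_def)
      qed
      show "\<bar>real (Aq (Suc n) \<phi>) - real (Aq n \<phi>)\<bar> \<le> CA" for n \<phi>
        using Aq_step1[of n \<phi>] Aq_step2[of n \<phi>] by (simp add: CA_def)
      show "real (Aq (m + n) \<phi>) \<le> real (Aq m \<phi>) + real (Aq n (\<lambda>z. \<phi> (z + int m))) + CA" for m n \<phi>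
        using Aq_sub[of m n \<phi>] by (simp add: CA_def)
      show "0 \<le> real (Aq n \<phi>)" for n \<phi> by simp
    qed
    then show ?thesis using that by blast
  qed
  have cA_pos: "cA > 0"
  proof -
    have "1 / (2 * real_of_int R) \<le> cA"
    proof (rule LIMSEQ_le_const[OF cA(1)], intro exI[of _ 2] allI impI)
      fix n :: nat assume n2: "2 \<le> n"
      have low: "(real n - 1) / real_of_int R \<le> real (Aq n \<phi>)" for \<phi>
      proof -
        have "real_of_int (int n - 1) \<le> real_of_int (R * int (Aq n \<phi>))" using Aq_lower[of n \<phi>] by linarith
        then show ?thesis using Rp by (simp add: field_simps)
      qed
      have "(real n - 1) / real_of_int R = Expt n (\<lambda>_::int \<Rightarrow> 'f. (real n - 1) / real_of_int R)" by (simp add: Expt_const)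
      also have "\<dots> \<le> Expt n (\<lambda>\<phi>. real (Aq n \<phi>))" by (rule Expt_mono) (rule low)
      finally have F: "(real n - 1) / real_of_int R \<le> Expt n (\<lambda>\<phi>. real (Aq n \<phi>))" .
      have "(real n - 1) / real_of_int R / real n \<le> Expt n (\<lambda>\<phi>. real (Aq n \<phi>)) / real n"
        using F by (rule divide_right_mono) simp
      moreover have "1 / (2 * real_of_int R) \<le> (real n - 1) / real_of_int R / real n"
        using n2 Rp by (simp add: field_simps)
      ultimately show "1 / (2 * real_of_int R) \<le> Expt n (\<lambda>\<phi>. real (Aq n \<phi>)) / real n" by linarith
    qed
    moreover have "1 / (2 * real_of_int R) > 0" using Rp by simp
    ultimately show ?thesis by linarith
  qed
  \<comment> \<open>The closed loop quantity through n + 1\<close>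
  define CU where "CU = real (max (K0 + 2 * D * nat (2 * R)) (max (2 * Kc) Kd))"
  obtain cU where cU: "(\<lambda>n. Expt n (\<lambda>\<phi>. real (Uq n \<phi>)) / real n) \<longlonglongrightarrow> cU"
    "AE \<omega> in ?M. (\<lambda>n. real (Uq n \<omega>) / real n) \<longlonglongrightarrow> cU"
  proof -
    have "\<exists>c. (\<lambda>n. Expt n (\<lambda>\<phi>. real (Uq n \<phi>)) / real n) \<longlonglongrightarrow> c \<and>
             (AE \<omega> in ?M. (\<lambda>n. real (Uq n \<omega>) / real n) \<longlonglongrightarrow> c)"
    proof (rule abstract_limit[where C = CU])
      show "real (Uq n \<phi>) = real (Uq n (restr_conf \<phi> n))" for n \<phi> by (simp add: Uq_def Uc_def rc_rc)
      show "\<bar>real (Uq n (\<phi>(z := e))) - real (Uq n \<phi>)\<bar> \<le> CU" if "z \<in> {1..int n}" for n \<phi> z e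
      proof -
        have "Uq n (\<phi>(z := e)) \<le> Uq n \<phi> + (K0 + 2 * D * nat (2 * R))" using Uq_BD[OF that] .
        moreover have "Uq n \<phi> \<le> Uq n (\<phi>(z := e)) + (K0 + 2 * D * nat (2 * R))"
          using Uq_BD[OF that, of "\<phi>(z := e)" "\<phi> z"] by simp
        ultimately show ?thesis by (simp add: CU_def)
      qed
      show "\<bar>real (Uq (Suc n) \<phi>) - real (Uq n \<phi>)\<bar> \<le> CU" for n \<phi>
        using Uq_step1[of n \<phi>] Uq_step2[of n \<phi>] by (simp add: CU_def)
      show "real (Uq (m + n) \<phi>) \<le> real (Uq m \<phi>) + real (Uq n (\<lambda>z. \<phi> (z + int m))) + CU" for m n \<phi>
        using Uq_sub[of m n \<phi>] by (simp add: CU_def)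
      show "0 \<le> real (Uq n \<phi>)" for n \<phi> by simp
    qed
    then show ?thesis using that by blast
  qed
  have cU_pos: "cU > 0"
  proof -
    have "1 / (2 * real_of_int R) \<le> cU"
    proof (rule LIMSEQ_le_const[OF cU(1)], intro exI[of _ "nat (2 * R) + 1"] allI impI)
      fix n :: nat assume n2: "nat (2 * R) + 1 \<le> n"
      then have n2': "2 * real_of_int R \<le> real n" "real n > 0" by linarith+
      have low: "(real n - real_of_int R) / real_of_int R \<le> real (Uq n \<phi>)" for \<phi>
      proof -
        have "real_of_int (int n - R) \<le> real_of_int (R * int (Uq n \<phi>))" using Uq_lower[of n \<phi>] by linarith
        then show ?thesis using Rp by (simp add: field_simps)
      qed
      have "(real n - real_of_int R) / real_of_int R = Expt n (\<lambda>_::int \<Rightarrow> 'f. (real n - real_of_int R) / real_of_int R)"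
        by (simp add: Expt_const)
      also have "\<dots> \<le> Expt n (\<lambda>\<phi>. real (Uq n \<phi>))" by (rule Expt_mono) (rule low)
      finally have F: "(real n - real_of_int R) / real_of_int R \<le> Expt n (\<lambda>\<phi>. real (Uq n \<phi>))" .
      have "(real n - real_of_int R) / real_of_int R / real n \<le> Expt n (\<lambda>\<phi>. real (Uq n \<phi>)) / real n"
        using F by (rule divide_right_mono) simp
      moreover have "1 / (2 * real_of_int R) \<le> (real n - real_of_int R) / real_of_int R / real n"
        using n2' Rp by (simp add: field_simps)
      ultimately show "1 / (2 * real_of_int R) \<le> Expt n (\<lambda>\<phi>. real (Uq n \<phi>)) / real n" by linarith
    qed
    moreover have "1 / (2 * real_of_int R) > 0" using Rp by simp
    ultimately show ?thesis by linarith
  qed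
  have cB: "AE \<omega> in ?M. (\<lambda>n. real (Bq n \<omega>) / real n) \<longlonglongrightarrow> cU"
    using AE_conjI[OF cU(2) gap_AE[OF card2]]
  proof (rule AE_mp, intro AE_I2 impI, elim conjE)
    fix \<omega> :: "int \<Rightarrow> 'f"
    assume U: "(\<lambda>n. real (Uq n \<omega>) / real n) \<longlonglongrightarrow> cU"
      and G: "(\<lambda>n. real_of_int (int n - Mx n \<omega>) / real n) \<longlonglongrightarrow> 0"
    define K where "K = real K0 + real Kc + 2 * real D * (1 + real_of_int R)"
    have bnd: "\<bar>real (Bq n \<omega>) - real (Uq n \<omega>)\<bar> \<le> K + 2 * real D * real_of_int (int n - Mx n \<omega>)" for n
    proof -
      have g0: "0 \<le> int n - Mx n \<omega>" using Mx_props(2)[of n \<omega>] by simp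
      have "real (nat (int n - Mx n \<omega> + 1 + R)) = real_of_int (int n - Mx n \<omega> + 1 + R)"
        using g0 R_nonneg by (intro of_nat_nat) simp
      then have "real (nat (int n - Mx n \<omega> + 1 + R)) = real_of_int (int n - Mx n \<omega>) + 1 + real_of_int R"
        by simp
      moreover have "real (Uq n \<omega>) \<le> real (Bq n \<omega> + (K0 + 2 * D * nat (int n - Mx n \<omega> + 1 + R)))"
        using UB[of n \<omega>] by (rule of_nat_mono)
      ultimately have "real (Uq n \<omega>) \<le> real (Bq n \<omega>) + real K0 + 2 * real D * (real_of_int (int n - Mx n \<omega>) + 1 + real_of_int R)"
        by (simp only: of_nat_add of_nat_mult add.assoc of_nat_numeral)
      moreover have "real (Bq n \<omega>) \<le> real (Uq n \<omega>) + real Kc" using BU[of n \<omega>] by simp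
      moreover have "0 \<le> real D * real_of_int (int n - Mx n \<omega>)" using g0 by simp
      ultimately show ?thesis
      proof -
        assume f1: "real (Uq n \<omega>) \<le> real (Bq n \<omega>) + real K0 + 2 * real D * (real_of_int (int n - Mx n \<omega>) + 1 + real_of_int R)"
          and f2: "real (Bq n \<omega>) \<le> real (Uq n \<omega>) + real Kc"
          and f3: "0 \<le> real D * real_of_int (int n - Mx n \<omega>)"
        have E1: "2 * real D * (real_of_int (int n - Mx n \<omega>) + 1 + real_of_int R) =
            2 * (real D * real_of_int (int n - Mx n \<omega>)) + 2 * real D + 2 * (real D * real_of_int R)"
          by (simp add: distrib_left)
        have E2: "K + 2 * real D * real_of_int (int n - Mx n \<omega>) =
            real K0 + real Kc + 2 * real D + 2 * (real D * real_of_int R) + 2 * (real D * real_of_int (int n - Mx n \<omega>))"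
          by (simp add: K_def distrib_left)
        have "0 \<le> real D * real_of_int R" using R_nonneg by simp
        then show ?thesis unfolding E2 abs_le_iff using f1 f2 f3 E1 by linarith
      qed
    qed
    have lim0: "(\<lambda>n. K / real n + 2 * real D * (real_of_int (int n - Mx n \<omega>) / real n)) \<longlonglongrightarrow> 0 + 2 * real D * 0"
      by (intro tendsto_intros G)
    have diff: "(\<lambda>n. (real (Bq n \<omega>) - real (Uq n \<omega>)) / real n) \<longlonglongrightarrow> 0"
    proof (rule Lim_null_comparison)
      show "(\<lambda>n. K / real n + 2 * real D * (real_of_int (int n - Mx n \<omega>) / real n)) \<longlonglongrightarrow> 0"
        using lim0 by simp
      show "\<forall>\<^sub>F n in sequentially. norm ((real (Bq n \<omega>) - real (Uq n \<omega>)) / real n) \<le> K / real n + 2 * real D * (real_of_int (int n - Mx n \<omega>) / real n)"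
        using eventually_ge_at_top[of 1]
      proof eventually_elim
        case (elim n)
        have np: "real n > 0" using elim by simp
        have "norm ((real (Bq n \<omega>) - real (Uq n \<omega>)) / real n) = \<bar>real (Bq n \<omega>) - real (Uq n \<omega>)\<bar> / real n"
          by (simp add: abs_divide)
        also have "\<dots> \<le> (K + 2 * real D * real_of_int (int n - Mx n \<omega>)) / real n"
          using bnd[of n] np by (simp add: divide_right_mono)
        finally show ?case by (simp add: add_divide_distrib)
      qed
    qed
    have "(\<lambda>n. (real (Bq n \<omega>) - real (Uq n \<omega>)) / real n + real (Uq n \<omega>) / real n) \<longlonglongrightarrow> 0 + cU"
      by (intro tendsto_intros diff U)
    then show "(\<lambda>n. real (Bq n \<omega>) / real n) \<longlonglongrightarrow> cU" by (simp add: diff_divide_distrib)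
  qed
  show ?thesis
    using cU_pos cA_pos cB cA(2) by (intro exI[of _ cU] exI[of _ cA]) (simp add: Aq_TSP Bq_TSP)
qed

end

theorem lemma6p3:
  fixes S :: "(int \<times> (int \<Rightarrow> 'f::{finite,group_add})) set"
  assumes "CARD('f) \<ge> 2"
    and "wr_symmetric_generating_set S"
  shows "\<exists>c1 c2 :: real. c1 > 0 \<and> c2 > 0 \<and>
    (AE \<omega> in unif_conf_measure.
       (\<lambda>n. real (TSP S (restr_conf \<omega> n) 1 1) / real n) \<longlonglongrightarrow> c1) \<and>
    (AE \<omega> in unif_conf_measure.
       (\<lambda>n. real (TSP S (restr_conf \<omega> n) 1 (int n)) / real n) \<longlonglongrightarrow> c2)"
proof -
  obtain a0 :: 'f where a0: "a0 \<noteq> 0"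
  proof (rule ccontr)
    assume "\<not> thesis"
    with that have "\<forall>a::'f. a = 0" by blast
    then have "\<forall>a\<in>(UNIV::'f set). \<forall>b\<in>UNIV. a = b" by metis
    then have "CARD('f) \<le> Suc 0" using card_le_Suc0_iff_eq[of "UNIV :: 'f set"] by simp
    then show False using assms(1) by simp
  qed
  interpret wrS0 S a0
    by unfold_locales (use assms(2) a0 in auto)
  show ?thesis by (rule main) (rule assms(1))
qed


end
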